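(* Let $\mathbb{T}=\mathbb{R}/\mathbb{Z}$, $a=1/2$, fix $0<\rho<1/20$, and let $\omega(r):=\sin(\log\log(1/r))$ for $0<r<\rho$. Let $A\neq 0$ satisfy $2|A|\rho^2\le 1/4$. Let $V\in C^3(\mathbb{T})$ satisfy $V(x)=\tfrac12 x^2+Ax^4\omega(|x|)$ for $|x|<\rho$ (with $V(0)=0$), $V(x)=\tfrac12(x-a)^2-A(x-a)^4\omega(|x-a|)$ for $|x-a|<\rho$ (with $V(a)=0$), and $V(x)>0$ for all $x\in\mathbb{T}\setminus\{0,a\}$. For $\varepsilon>0$ let $P_\varepsilon:=-2\varepsilon^2\frac{d^2}{dx^2}+V$ on $\mathbb{T}$, let $U_\varepsilon>0$ be its positive principal eigenfunction normalized by $\int_{\mathbb{T}}U_\varepsilon^2\,dx=1$, and set $\phi^\varepsilon:=-2\varepsilon\log\big(U_\varepsilon/U_\varepsilon(0)\big)$. Let $E_0^D(\varepsilon)$ and $E_a^D(\varepsilon)$ be the first Dirichlet eigenvalues of $P_\varepsilon$ on $(-\rho,\rho)$ and on $(a-\rho,a+\rho)$, respectively. Fix $C_0>0$. Then there are constants $\sigma>0$, $C>0$, $\varepsilon_0>0$ with the following property. If, along a sequence $\varepsilon\to0$, $$E_0^D(\varepsilon)\le E_a^D(\varepsilon)-C_0\varepsilon^2,$$ then for $0<\varepsilon<\varepsilon_0$ along that sequence, $\dfrac{U_\varepsilon(a)}{U_\varepsilon(0)}\le Ce^{-\sigma/\varepsilon}$, and consequently $\liminf_{\varepsilon\to0}\phi^\varepsilon(a)>0$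 along that sequence. Similarly, if along a sequence $\varepsilon\to0$, $$E_a^D(\varepsilon)\le E_0^D(\varepsilon)-C_0\varepsilon^2,$$ then for $0<\varepsilon<\varepsilon_0$ along that sequence, $\dfrac{U_\varepsilon(0)}{U_\varepsilon(a)}\le Ce^{-\sigma/\varepsilon}$, and $\limsup_{\varepsilon\to0}\phi^\varepsilon(a)<0$ along that sequence.
   Context: Periodic functions on $\mathbb{R}$ are identified with functions on $\mathbb{T}$; intervals are understood in the periodic sense. The function $\phi^\varepsilon$ so defined is the solution, normalized by $\phi^\varepsilon(0)=0$, of $\tfrac12|(\phi^\varepsilon)'|^2-V-\varepsilon(\phi^\varepsilon)''=c(\varepsilon)$ on $\mathbb{T}$ for the appropriate constant $c(\varepsilon)$. *)

theory Defs
  imports "HOL-Analysis.Analysis"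
begin

text \<open>Functions on the torus T = R/Z are represented as 1-periodic functions on R.
  The operator is P_eps = -2 eps^2 d^2/dx^2 + V (classical, real-valued eigenfunctions).\<close>

definition periodic1 :: "(real \<Rightarrow> real) \<Rightarrow> bool" where
  "periodic1 f \<longleftrightarrow> (\<forall>x. f (x + 1) = f x)"

definition C3 :: "(real \<Rightarrow> real) \<Rightarrow> bool" where
  "C3 f \<longleftrightarrow> (\<forall>k<3. \<forall>x. ((deriv ^^ k) f) differentiable (at x))
              \<and> continuous_on UNIV ((deriv ^^ 3) f)"

definition omega :: "real \<Rightarrow> real" where
  "omega r = sin (ln (ln (1 / r)))"

definition periodic_eigenvalues :: "real \<Rightarrow> (real \<Rightarrow> real) \<Rightarrow> real set" where
  "periodic_eigenvalues \<epsilon> V = {lam. \<exists>u u' u''. periodic1 u \<and> (\<exists>x. u x \<noteq> 0) \<and>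
     (\<forall>x. (u has_real_derivative u' x) (at x) \<and> (u' has_real_derivative u'' x) (at x) \<and>
          - 2 * \<epsilon>\<^sup>2 * u'' x + V x * u x = lam * u x)}"

definition principal_eigenvalue :: "real \<Rightarrow> (real \<Rightarrow> real) \<Rightarrow> real" where
  "principal_eigenvalue \<epsilon> V = Inf (periodic_eigenvalues \<epsilon> V)"

definition principal_eigenfunction :: "real \<Rightarrow> (real \<Rightarrow> real) \<Rightarrow> (real \<Rightarrow> real) \<Rightarrow> bool" where
  "principal_eigenfunction \<epsilon> V U \<longleftrightarrow> periodic1 U \<and> (\<forall>x. U x > 0) \<and>
     (\<exists>U' U''. \<forall>x. (U has_real_derivative U' x) (at x) \<and> (U' has_real_derivative U'' x) (at x) \<and>
          - 2 * \<epsilon>\<^sup>2 * U'' x + V x * U x = principal_eigenvalue \<epsilon> V * U x) \<and>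
     integral {0..1} (\<lambda>x. (U x)\<^sup>2) = 1"

definition dirichlet_eigenvalues :: "real \<Rightarrow> (real \<Rightarrow> real) \<Rightarrow> real \<Rightarrow> real \<Rightarrow> real set" where
  "dirichlet_eigenvalues \<epsilon> V l r = {lam. \<exists>u u' u''. continuous_on {l..r} u \<and> u l = 0 \<and> u r = 0 \<and>
     (\<exists>x\<in>{l<..<r}. u x \<noteq> 0) \<and>
     (\<forall>x\<in>{l<..<r}. (u has_real_derivative u' x) (at x) \<and> (u' has_real_derivative u'' x) (at x) \<and>
          - 2 * \<epsilon>\<^sup>2 * u'' x + V x * u x = lam * u x)}"

definition first_dirichlet_eigenvalue :: "real \<Rightarrow> (real \<Rightarrow> real) \<Rightarrow> real \<Rightarrow> real \<Rightarrow> real" where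
  "first_dirichlet_eigenvalue \<epsilon> V l r = Inf (dirichlet_eigenvalues \<epsilon> V l r)"

end

theory Submission
  imports Defs
begin

fun pic :: "(real \<Rightarrow> real) \<Rightarrow> real \<Rightarrow> nat \<Rightarrow> real \<Rightarrow> real \<times> real" where
  "pic q l 0 x = (x - l, 1)"
| "pic q l (Suc n) x = (integral {l..x} (\<lambda>t. snd (pic q l n t)),
       1 + integral {l..x} (\<lambda>t. q t * fst (pic q l n t)))"

lemma integral_fun_cont:
  fixes g :: "real \<Rightarrow> real"
  assumes "continuous_on {l..r} g"
  shows "continuous_on {l..r} (\<lambda>x. integral {l..x} g)"
  by (rule DERIV_continuous_on[OF integral_has_real_derivative[OF assms]])

lemma pic_cont:
  assumes "continuous_on {l..r} q"
  shows "continuous_on {l..r} (\<lambda>x. fst (pic q l n x)) \<and> continuous_on {l..r} (\<lambda>x. snd (pic q l n x))"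
proof (induction n)
  case 0
  then show ?case by (auto intro!: continuous_intros)
next
  case (Suc n)
  have "continuous_on {l..r} (\<lambda>x. integral {l..x} (\<lambda>t. snd (pic q l n t)))"
    by (rule integral_fun_cont) (use Suc in blast)
  moreover have "continuous_on {l..r} (\<lambda>x. 1 + integral {l..x} (\<lambda>t. q t * fst (pic q l n t)))"
    by (intro continuous_on_add continuous_on_const integral_fun_cont continuous_on_mult) (use Suc assms in auto)
  ultimately show ?case by (simp only: pic.simps fst_conv snd_conv)
qed

lemma integral_poly_shift:
  fixes l x c :: real
  assumes "l \<le> x"
  shows "integral {l..x} (\<lambda>t. c * (t - l) ^ n / fact n) = c * (x - l) ^ Suc n / fact (Suc n)"
proof -
  have "((\<lambda>t. c * (t - l) ^ n / fact n) has_integral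
      ((\<lambda>t. c * (t - l) ^ Suc n / fact (Suc n)) x - (\<lambda>t. c * (t - l) ^ Suc n / fact (Suc n)) l)) {l..x}"
  proof (rule fundamental_theorem_of_calculus[OF assms])
    fix t assume "t \<in> {l..x}"
    have "((\<lambda>t. c * (t - l) ^ Suc n / fact (Suc n)) has_real_derivative
        c * (real (Suc n) * (t - l) ^ n * 1) / fact (Suc n)) (at t within {l..x})"
      by (intro derivative_eq_intros) auto
    moreover have "c * (real (Suc n) * (t - l) ^ n * 1) / fact (Suc n) = c * (t - l) ^ n / fact n"
      proof -
      have "c * (real (Suc n) * (t - l) ^ n * 1) / fact (Suc n) = (real (Suc n) * (c * (t - l) ^ n)) / (real (Suc n) * fact n)"
        by (simp only: fact_Suc of_nat_mult mult_1_right mult.assoc mult.left_commute)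
      also have "\<dots> = c * (t - l) ^ n / fact n"
        by (rule mult_divide_mult_cancel_left) simp
      finally show ?thesis .
    qed
    ultimately show "((\<lambda>t. c * (t - l) ^ Suc n / fact (Suc n)) has_vector_derivative
        c * (t - l) ^ n / fact n) (at t within {l..x})"
      by (simp add: has_real_derivative_iff_has_vector_derivative)
  qed
  then have "integral {l..x} (\<lambda>t. c * (t - l) ^ n / fact n) = 
     (\<lambda>t. c * (t - l) ^ Suc n / fact (Suc n)) x - (\<lambda>t. c * (t - l) ^ Suc n / fact (Suc n)) l"
    by (rule integral_unique)
  then show ?thesis by (simp del: integral_mult_left integral_divide integral_mult_right)
qed

lemma cont_bounded_Icc:
  fixes f :: "real \<Rightarrow> real"
  assumes "continuous_on {a..b} f"
  obtains B where "B \<ge> 0" "\<And>x. x \<in> {a..b} \<Longrightarrow> \<bar>f x\<bar> \<le> B"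
proof -
  have "bounded (f ` {a..b})"
    by (rule compact_imp_bounded[OF compact_continuous_image[OF assms compact_Icc]])
  then obtain B where "\<forall>y\<in>f ` {a..b}. norm y \<le> B" by (auto simp: bounded_iff)
  then have "\<And>x. x \<in> {a..b} \<Longrightarrow> \<bar>f x\<bar> \<le> max B 0"
    by (metis image_eqI max.coboundedI1 real_norm_def)
  then show ?thesis using that[of "max B 0"] by auto
qed

lemma pic_bound:
  fixes q :: "real \<Rightarrow> real"
  assumes qc: "continuous_on {l..r} q"
    and Q: "\<And>t. t \<in> {l..r} \<Longrightarrow> \<bar>q t\<bar> \<le> Q"
    and M0: "\<And>x. x \<in> {l..r} \<Longrightarrow> \<bar>fst (pic q l 1 x) - fst (pic q l 0 x)\<bar> + \<bar>snd (pic q l 1 x) - snd (pic q l 0 x)\<bar> \<le> M0"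
  shows "x \<in> {l..r} \<Longrightarrow> \<bar>fst (pic q l (Suc n) x) - fst (pic q l n x)\<bar> + \<bar>snd (pic q l (Suc n) x) - snd (pic q l n x)\<bar>
       \<le> M0 * (1 + Q) ^ n * (x - l) ^ n / fact n"
proof (induction n arbitrary: x)
  case 0
  then show ?case using M0 by simp
next
  case (Suc n)
  define B where "B = (\<lambda>t. M0 * (1 + Q) ^ n * (t - l) ^ n / fact n)"
  have Q0: "Q \<ge> 0" using Q[of l] Suc.prems by auto
  have sub: "{l..x} \<subseteq> {l..r}" using Suc.prems by auto
  have xl: "l \<le> x" using Suc.prems by auto
  have cf: "\<And>m. continuous_on {l..x} (\<lambda>t. fst (pic q l m t))" "\<And>m. continuous_on {l..x} (\<lambda>t. snd (pic q l m t))"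
    using pic_cont[OF qc] continuous_on_subset[OF _ sub] by blast+
  have cq: "continuous_on {l..x} q" using continuous_on_subset[OF qc sub] .
  have iB: "B integrable_on {l..x}" unfolding B_def
    by (intro integrable_continuous_interval continuous_intros) auto
  have IB: "integral {l..x} B = M0 * (1 + Q) ^ n * (x - l) ^ Suc n / fact (Suc n)"
    unfolding B_def by (rule integral_poly_shift[OF xl])
  have fs: "\<And>m. fst (pic q l (Suc m) x) = integral {l..x} (\<lambda>t. snd (pic q l m t))" by simp
  have ss: "\<And>m. snd (pic q l (Suc m) x) = 1 + integral {l..x} (\<lambda>t. q t * fst (pic q l m t))" by simp
  have e1: "fst (pic q l (Suc (Suc n)) x) - fst (pic q l (Suc n) x) =
      integral {l..x} (\<lambda>t. snd (pic q l (Suc n) t) - snd (pic q l n t))"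
    unfolding fs[of "Suc n"] fs[of n]
    by (rule integral_diff[symmetric]; intro integrable_continuous_interval cf)
  have e2: "snd (pic q l (Suc (Suc n)) x) - snd (pic q l (Suc n) x) =
      integral {l..x} (\<lambda>t. q t * (fst (pic q l (Suc n) t) - fst (pic q l n t)))"
  proof -
    have "snd (pic q l (Suc (Suc n)) x) - snd (pic q l (Suc n) x) =
      integral {l..x} (\<lambda>t. q t * fst (pic q l (Suc n) t)) - integral {l..x} (\<lambda>t. q t * fst (pic q l n t))"
      unfolding ss[of "Suc n"] ss[of n] by simp
    also have "\<dots> = integral {l..x} (\<lambda>t. q t * fst (pic q l (Suc n) t) - q t * fst (pic q l n t))"
      by (rule integral_diff[symmetric]; intro integrable_continuous_interval continuous_on_mult cq cf)
    finally show ?thesis by (simp add: algebra_simps)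
  qed
  have b1: "\<bar>fst (pic q l (Suc (Suc n)) x) - fst (pic q l (Suc n) x)\<bar> \<le> integral {l..x} B"
    unfolding e1 real_norm_def[symmetric]
  proof (rule integral_norm_bound_integral)
    show "(\<lambda>t. snd (pic q l (Suc n) t) - snd (pic q l n t)) integrable_on {l..x}"
      by (intro integrable_continuous_interval continuous_on_diff cf)
    show "B integrable_on {l..x}" by (rule iB)
    fix t assume "t \<in> {l..x}"
    then have "t \<in> {l..r}" using sub by auto
    from Suc.IH[OF this] show "norm (snd (pic q l (Suc n) t) - snd (pic q l n t)) \<le> B t"
      unfolding B_def real_norm_def by linarith
  qed
  have b2: "\<bar>snd (pic q l (Suc (Suc n)) x) - snd (pic q l (Suc n) x)\<bar> \<le> integral {l..x} (\<lambda>t. Q * B t)"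
    unfolding e2 real_norm_def[symmetric]
  proof (rule integral_norm_bound_integral)
    show "(\<lambda>t. q t * (fst (pic q l (Suc n) t) - fst (pic q l n t))) integrable_on {l..x}"
      by (intro integrable_continuous_interval continuous_on_diff continuous_on_mult cq cf)
    show "(\<lambda>t. Q * B t) integrable_on {l..x}" using integrable_on_cmult_left[OF iB] by simp
    fix t assume "t \<in> {l..x}"
    then have t: "t \<in> {l..r}" using sub by auto
    from Suc.IH[OF this] have "\<bar>fst (pic q l (Suc n) t) - fst (pic q l n t)\<bar> \<le> B t"
      unfolding B_def by linarith
    then show "norm (q t * (fst (pic q l (Suc n) t) - fst (pic q l n t))) \<le> Q * B t"
      unfolding real_norm_def abs_mult using Q[OF t] by (intro mult_mono) auto
  qed
  have "integral {l..x} (\<lambda>t. Q * B t) = Q * integral {l..x} B" by simp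
  with b1 b2 have "\<bar>fst (pic q l (Suc (Suc n)) x) - fst (pic q l (Suc n) x)\<bar> + \<bar>snd (pic q l (Suc (Suc n)) x) - snd (pic q l (Suc n) x)\<bar>
     \<le> (1 + Q) * integral {l..x} B" by (simp add: algebra_simps)
  also have "\<dots> = M0 * (1 + Q) ^ Suc n * (x - l) ^ Suc n / fact (Suc n)"
    unfolding IB by simp
  finally show ?case .
qed

lemma ul_of_summable_diff:
  fixes f :: "nat \<Rightarrow> real \<Rightarrow> real"
  assumes "\<And>n x. x \<in> A \<Longrightarrow> \<bar>f (Suc n) x - f n x\<bar> \<le> M n" "summable M"
  shows "uniform_limit A f (\<lambda>x. f 0 x + (\<Sum>i. f (Suc i) x - f i x)) sequentially"
proof -
  have "uniform_limit A (\<lambda>n x. \<Sum>i<n. f (Suc i) x - f i x) (\<lambda>x. \<Sum>i. f (Suc i) x - f i x) sequentially"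
    by (rule Weierstrass_m_test) (use assms in auto)
  then have "uniform_limit A (\<lambda>n x. f 0 x + (\<Sum>i<n. f (Suc i) x - f i x)) (\<lambda>x. f 0 x + (\<Sum>i. f (Suc i) x - f i x)) sequentially"
    by (intro uniform_limit_add uniform_limit_const)
  moreover have "(\<lambda>n x. f 0 x + (\<Sum>i<n. f (Suc i) x - f i x)) = f"
  proof (intro ext)
    fix n x
    have "(\<Sum>i<n. f (Suc i) x - f i x) = f n x - f 0 x" by (rule sum_lessThan_telescope)
    then show "f 0 x + (\<Sum>i<n. f (Suc i) x - f i x) = f n x" by simp
  qed
  ultimately show ?thesis by simp
qed

lemma ul_integral:
  fixes f :: "nat \<Rightarrow> real \<Rightarrow> real"
  assumes "uniform_limit {l..r} f g sequentially" "\<And>n. continuous_on {l..r} (f n)" "x \<in> {l..r}"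
  shows "(\<lambda>n. integral {l..x} (f n)) \<longlonglongrightarrow> integral {l..x} g"
proof -
  have sub: "{l..x} \<subseteq> {l..r}" using assms(3) by auto
  have "uniform_limit {l..x} f g sequentially" using uniform_limit_on_subset[OF assms(1) sub] .
  moreover have "\<And>n. continuous_on {l..x} (f n)" using continuous_on_subset[OF assms(2) sub] .
  ultimately show ?thesis
  proof (rule uniform_limit_integral)
    fix I J assume "\<And>n. (f n has_integral I n) {l..x}" "(g has_integral J) {l..x}" "I \<longlonglongrightarrow> J"
    then have "(\<lambda>n. integral {l..x} (f n)) = I" "integral {l..x} g = J" by (auto simp: integral_unique)
    then show ?thesis using \<open>I \<longlonglongrightarrow> J\<close> by simp
  qed simp
qed

lemma ode_exists:
  fixes q :: "real \<Rightarrow> real"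
  assumes lr: "l \<le> r" and qc: "continuous_on {l..r} q"
  shows "\<exists>y z. y l = 0 \<and> z l = 1 \<and> (\<forall>x\<in>{l..r}. (y has_real_derivative z x) (at x within {l..r}) \<and>
      (z has_real_derivative q x * y x) (at x within {l..r}))"
proof -
  obtain Q where Q: "Q \<ge> 0" "\<And>t. t \<in> {l..r} \<Longrightarrow> \<bar>q t\<bar> \<le> Q"
    using cont_bounded_Icc[OF qc] by blast
  have c0: "continuous_on {l..r} (\<lambda>x. \<bar>fst (pic q l 1 x) - fst (pic q l 0 x)\<bar> + \<bar>snd (pic q l 1 x) - snd (pic q l 0 x)\<bar>)"
    by (intro continuous_on_add continuous_on_rabs continuous_on_diff) (use pic_cont[OF qc, of 1] pic_cont[OF qc, of 0] in blast)+
  obtain M0 where M0: "M0 \<ge> 0" "\<And>x. x \<in> {l..r} \<Longrightarrow> \<bar>\<bar>fst (pic q l 1 x) - fst (pic q l 0 x)\<bar> + \<bar>snd (pic q l 1 x) - snd (pic q l 0 x)\<bar>\<bar> \<le> M0"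
    using cont_bounded_Icc[OF c0] by blast
  define M where "M = (\<lambda>n. M0 * (inverse (fact n) * ((1 + Q) * (r - l)) ^ n))"
  have sM: "summable M" unfolding M_def by (intro summable_mult summable_exp)
  have bd: "\<bar>fst (pic q l (Suc n) x) - fst (pic q l n x)\<bar> + \<bar>snd (pic q l (Suc n) x) - snd (pic q l n x)\<bar> \<le> M n"
    if x: "x \<in> {l..r}" for n x
  proof -
    have "\<bar>fst (pic q l (Suc n) x) - fst (pic q l n x)\<bar> + \<bar>snd (pic q l (Suc n) x) - snd (pic q l n x)\<bar>
       \<le> M0 * (1 + Q) ^ n * (x - l) ^ n / fact n"
      using pic_bound[OF qc Q(2) order_trans[OF abs_ge_self M0(2)] x] by blast
    also have "\<dots> \<le> M0 * (1 + Q) ^ n * (r - l) ^ n / fact n"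
      using x M0 Q by (intro divide_right_mono mult_left_mono power_mono) auto
    also have "\<dots> = M n" unfolding M_def by (simp add: power_mult_distrib[symmetric] field_simps mult.commute)
    finally show ?thesis .
  qed
  have bd1: "\<bar>fst (pic q l (Suc n) x) - fst (pic q l n x)\<bar> \<le> M n" if "x \<in> {l..r}" for n x
    using bd[OF that, of n] abs_ge_zero[of "snd (pic q l (Suc n) x) - snd (pic q l n x)"] by linarith
  have bd2: "\<bar>snd (pic q l (Suc n) x) - snd (pic q l n x)\<bar> \<le> M n" if "x \<in> {l..r}" for n x
    using bd[OF that, of n] abs_ge_zero[of "fst (pic q l (Suc n) x) - fst (pic q l n x)"] by linarith
  define Y where "Y = (\<lambda>x. fst (pic q l 0 x) + (\<Sum>i. fst (pic q l (Suc i) x) - fst (pic q l i x)))"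
  define Z where "Z = (\<lambda>x. snd (pic q l 0 x) + (\<Sum>i. snd (pic q l (Suc i) x) - snd (pic q l i x)))"
  have uY: "uniform_limit {l..r} (\<lambda>n x. fst (pic q l n x)) Y sequentially"
    unfolding Y_def by (rule ul_of_summable_diff[OF bd1 sM])
  have uZ: "uniform_limit {l..r} (\<lambda>n x. snd (pic q l n x)) Z sequentially"
    unfolding Z_def by (rule ul_of_summable_diff[OF bd2 sM])
  have cY: "continuous_on {l..r} Y"
    by (rule uniform_limit_theorem[OF _ uY]) (use pic_cont[OF qc] in auto)
  have cZ: "continuous_on {l..r} Z"
    by (rule uniform_limit_theorem[OF _ uZ]) (use pic_cont[OF qc] in auto)
  have cqY: "continuous_on {l..r} (\<lambda>t. q t * Y t)" using qc cY by (intro continuous_on_mult)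
  have bq: "bounded (q ` {l..r})" by (rule compact_imp_bounded[OF compact_continuous_image[OF qc compact_Icc]])
  have bY: "bounded (Y ` {l..r})" by (rule compact_imp_bounded[OF compact_continuous_image[OF cY compact_Icc]])
  have uqY: "uniform_limit {l..r} (\<lambda>n t. q t * fst (pic q l n t)) (\<lambda>t. q t * Y t) sequentially"
    by (rule uniform_lim_mult[OF uniform_limit_const uY bq bY])
  have eqY: "Y x = integral {l..x} Z" if x: "x \<in> {l..r}" for x
  proof -
    have "(\<lambda>n. fst (pic q l (Suc n) x)) \<longlonglongrightarrow> Y x"
      using tendsto_uniform_limitI[OF uY x] by (rule LIMSEQ_Suc)
    moreover have "(\<lambda>n. fst (pic q l (Suc n) x)) \<longlonglongrightarrow> integral {l..x} Z"
      using ul_integral[OF uZ _ x] pic_cont[OF qc] by simp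
    ultimately show ?thesis by (rule LIMSEQ_unique)
  qed
  have eqZ: "Z x = 1 + integral {l..x} (\<lambda>t. q t * Y t)" if x: "x \<in> {l..r}" for x
  proof -
    have "(\<lambda>n. snd (pic q l (Suc n) x)) \<longlonglongrightarrow> Z x"
      using tendsto_uniform_limitI[OF uZ x] by (rule LIMSEQ_Suc)
    moreover have "(\<lambda>n. snd (pic q l (Suc n) x)) \<longlonglongrightarrow> 1 + integral {l..x} (\<lambda>t. q t * Y t)"
    proof -
      have "(\<lambda>n. integral {l..x} (\<lambda>t. q t * fst (pic q l n t))) \<longlonglongrightarrow> integral {l..x} (\<lambda>t. q t * Y t)"
        by (rule ul_integral[OF uqY _ x], rule continuous_on_mult[OF qc], use pic_cont[OF qc] in blast)
      then have "(\<lambda>n. 1 + integral {l..x} (\<lambda>t. q t * fst (pic q l n t))) \<longlonglongrightarrow> 1 + integral {l..x} (\<lambda>t. q t * Y t)"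
        by (intro tendsto_add tendsto_const)
      then show ?thesis by simp
    qed
    ultimately show ?thesis by (rule LIMSEQ_unique)
  qed
  have "Y l = 0" using eqY[of l] lr by simp
  moreover have "Z l = 1" using eqZ[of l] lr by simp
  moreover have "(Y has_real_derivative Z x) (at x within {l..r}) \<and>
      (Z has_real_derivative q x * Y x) (at x within {l..r})" if x: "x \<in> {l..r}" for x
  proof
    show "(Y has_real_derivative Z x) (at x within {l..r})"
      by (rule has_field_derivative_transform_within[OF integral_has_real_derivative[OF cZ x] zero_less_one x])
         (simp add: eqY)
    have "((\<lambda>x. 1 + integral {l..x} (\<lambda>t. q t * Y t)) has_real_derivative 0 + q x * Y x) (at x within {l..r})"
      by (intro DERIV_add DERIV_const integral_has_real_derivative[OF cqY x])
    then have "((\<lambda>x. 1 + integral {l..x} (\<lambda>t. q t * Y t)) has_real_derivative q x * Y x) (at x within {l..r})"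
      by simp
    then show "(Z has_real_derivative q x * Y x) (at x within {l..r})"
      by (rule has_field_derivative_transform_within[OF _ zero_less_one x]) (simp_all add: eqZ)
  qed
  ultimately show ?thesis by blast
qed

lemma mvt_open:
  fixes f f' :: "real \<Rightarrow> real"
  assumes "a < b" "continuous_on {a..b} f" "\<And>x. a < x \<Longrightarrow> x < b \<Longrightarrow> (f has_real_derivative f' x) (at x)"
  shows "\<exists>z. a < z \<and> z < b \<and> f b - f a = (b - a) * f' z"
proof -
  obtain l z where z: "a < z" "z < b" "DERIV f z :> l" "f b - f a = (b - a) * l"
    using MVT[OF assms(1,2)] assms(3) real_differentiable_def by blast
  have "l = f' z" using DERIV_unique[OF z(3) assms(3)[OF z(1,2)]] .
  then show ?thesis using z by blast
qed

lemma sturm_contra: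
  fixes p w p' w' p'' w'' :: "real \<Rightarrow> real"
  assumes cd: "c < d"
    and cp: "continuous_on {c..d} p" and cw: "continuous_on {c..d} w"
    and pc: "p c = 0" and pd: "p d = 0" and ppos: "\<And>x. c < x \<Longrightarrow> x < d \<Longrightarrow> p x > 0"
    and wpos: "\<And>x. c \<le> x \<Longrightarrow> x \<le> d \<Longrightarrow> w x > 0"
    and dp: "\<And>x. c < x \<Longrightarrow> x < d \<Longrightarrow> (p has_real_derivative p' x) (at x)"
    and dp': "\<And>x. c < x \<Longrightarrow> x < d \<Longrightarrow> (p' has_real_derivative p'' x) (at x)"
    and dw: "\<And>x. c < x \<Longrightarrow> x < d \<Longrightarrow> (w has_real_derivative w' x) (at x)"
    and dw': "\<And>x. c < x \<Longrightarrow> x < d \<Longrightarrow> (w' has_real_derivative w'' x) (at x)"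
    and ineq: "\<And>x. c < x \<Longrightarrow> x < d \<Longrightarrow> p'' x * w x - p x * w'' x \<ge> 0"
  shows False
proof -
  define h where "h = (\<lambda>x. p x / w x)"
  define W where "W = (\<lambda>x. p' x * w x - p x * w' x)"
  define m where "m = (c + d) / 2"
  have m: "c < m" "m < d" using cd unfolding m_def by auto
  have ch: "continuous_on {c..d} h" unfolding h_def
    using cp cw wpos by (intro continuous_on_divide) (auto, metis less_irrefl)
  have dh: "(h has_real_derivative W x / (w x)\<^sup>2) (at x)" if "c < x" "x < d" for x
  proof -
    have "(h has_real_derivative (p' x * w x - p x * w' x) / (w x * w x)) (at x)"
      unfolding h_def using dp[OF that] dw[OF that] wpos[of x] that
      by (intro DERIV_divide) auto
    then show ?thesis by (simp add: W_def power2_eq_square)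
  qed
  have dW: "(W has_real_derivative p'' x * w x - p x * w'' x) (at x)" if "c < x" "x < d" for x
  proof -
    have "(W has_real_derivative (p'' x * w x + w' x * p' x) - (p' x * w' x + w'' x * p x)) (at x)"
      unfolding W_def by (intro DERIV_diff DERIV_mult dp dw dp' dw' that)
    then show ?thesis by (simp add: algebra_simps)
  qed
  have hm: "h m > 0" unfolding h_def using ppos[OF m] wpos[of m] m by auto
  obtain x1 where x1: "c < x1" "x1 < m" "h m - h c = (m - c) * (W x1 / (w x1)\<^sup>2)"
    using mvt_open[OF m(1) continuous_on_subset[OF ch], of "\<lambda>x. W x / (w x)\<^sup>2"] dh m by force
  obtain x2 where x2: "m < x2" "x2 < d" "h d - h m = (d - m) * (W x2 / (w x2)\<^sup>2)"
    using mvt_open[OF m(2) continuous_on_subset[OF ch], of "\<lambda>x. W x / (w x)\<^sup>2"] dh m by force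
  have hc: "h c = 0" "h d = 0" unfolding h_def using pc pd by auto
  have "0 < (m - c) * (W x1 / (w x1)\<^sup>2)" using x1(3) hm hc(1) by (metis diff_zero)
  then have "W x1 / (w x1)\<^sup>2 > 0" using m by (metis zero_less_mult_pos diff_gt_0_iff_gt)
  then have W1: "W x1 > 0" by (simp add: zero_less_divide_iff)
  have "(d - m) * (W x2 / (w x2)\<^sup>2) = - h m" using x2(3) hc(2) by (metis diff_0)
  then have A: "(d - m) * (W x2 / (w x2)\<^sup>2) < 0" using hm by simp
  have "W x2 / (w x2)\<^sup>2 < 0"
  proof -
    show ?thesis
    proof (rule ccontr)
      assume "\<not> W x2 / (w x2)\<^sup>2 < 0"
      then have "0 \<le> (d - m) * (W x2 / (w x2)\<^sup>2)" using m by (intro mult_nonneg_nonneg) auto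
      then show False using A by linarith
    qed
  qed
  then have W2: "W x2 < 0" by (simp add: divide_less_0_iff)
  have "W x1 \<le> W x2"
  proof (rule DERIV_nonneg_imp_nondecreasing[of x1 x2 W])
    show "x1 \<le> x2" using x1 x2 by auto
    fix x assume "x1 \<le> x" "x \<le> x2"
    then have "c < x" "x < d" using x1 x2 m by auto
    then show "\<exists>y. DERIV W x :> y \<and> y \<ge> 0" using dW ineq by blast
  qed
  with W1 W2 show False by simp
qed

lemma second_deriv_max:
  fixes f f' :: "real \<Rightarrow> real"
  assumes d: "0 < d"
    and mx: "\<And>y. \<bar>y - x\<bar> < d \<Longrightarrow> f y \<le> f x"
    and df: "\<And>y. \<bar>y - x\<bar> < d \<Longrightarrow> (f has_real_derivative f' y) (at y)"
    and df': "(f' has_real_derivative D) (at x)"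
  shows "D \<le> 0"
proof (rule ccontr)
  assume "\<not> D \<le> 0"
  then have D: "D > 0" by simp
  have f'0: "f' x = 0"
    by (rule DERIV_local_max[OF df[of x] d]) (use d mx in \<open>auto simp: abs_minus_commute\<close>)
  obtain e where e: "e > 0" "\<And>h. h > 0 \<Longrightarrow> h < e \<Longrightarrow> f' x < f' (x + h)"
    using DERIV_pos_inc_right[OF df' D] by blast
  define h where "h = min e d / 2"
  have h: "h > 0" "h < e" "h < d" using e d unfolding h_def by auto
  have cf: "continuous_on {x..x + h} f"
    by (rule has_real_derivative_imp_continuous_on[OF df]) (use h in auto)
  obtain z where z: "x < z" "z < x + h" "f (x + h) - f x = (x + h - x) * f' z"
    using mvt_open[OF _ cf, of f'] h df by force
  have "f' z > 0" using e(2)[of "z - x"] z h f'0 by auto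
  then have "f (x + h) > f x" using z h by (smt (verit) mult_pos_pos)
  moreover have "f (x + h) \<le> f x" using mx[of "x + h"] h by auto
  ultimately show False by simp
qed

lemma gronwall:
  fixes E E' :: "real \<Rightarrow> real"
  assumes lR: "l \<le> x" and cE: "continuous_on {l..x} E"
    and dE: "\<And>t. l < t \<Longrightarrow> t < x \<Longrightarrow> (E has_real_derivative E' t) (at t)"
    and ineq: "\<And>t. l < t \<Longrightarrow> t < x \<Longrightarrow> E' t \<le> K * E t + B"
    and K: "K > 0" and B: "B \<ge> 0"
  shows "E x \<le> (E l + B / K) * exp (K * (x - l))"
proof -
  define G where "G = (\<lambda>t. (E t + B / K) * exp (- K * (t - l)))"
  have "G x \<le> G l"
  proof (rule DERIV_nonpos_imp_decreasing_open[OF lR])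
    fix t assume t: "l < t" "t < x"
    have "(G has_real_derivative E' t * exp (- K * (t - l)) + (E t + B / K) * (exp (- K * (t - l)) * (- K * 1))) (at t)"
      unfolding G_def using dE[OF t] by (intro derivative_eq_intros) auto
    moreover have "E' t * exp (- K * (t - l)) + (E t + B / K) * (exp (- K * (t - l)) * (- K * 1)) =
        (E' t - K * E t - B) * exp (- K * (t - l))"
      using K by (simp add: field_simps)
    moreover have "(E' t - K * E t - B) * exp (- K * (t - l)) \<le> 0"
      using ineq[OF t] by (intro mult_nonpos_nonneg) auto
    ultimately show "\<exists>y. DERIV G t :> y \<and> y \<le> 0" by metis
  next
    show "continuous_on {l..x} G" unfolding G_def using cE by (intro continuous_intros)
  qed
  then have "(E x + B / K) * exp (- K * (x - l)) \<le> E l + B / K" unfolding G_def by simp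
  then have "(E x + B / K) * exp (- K * (x - l)) * exp (K * (x - l)) \<le> (E l + B / K) * exp (K * (x - l))"
    by (rule mult_right_mono) simp
  moreover have "(E x + B / K) * exp (- K * (x - l)) * exp (K * (x - l)) = E x + B / K"
    by (simp add: mult.assoc exp_add[symmetric])
  ultimately have "E x + B / K \<le> (E l + B / K) * exp (K * (x - l))" by linarith
  then show ?thesis using B K by (smt (verit) divide_nonneg_pos)
qed

lemma first_zero:
  fixes u :: "real \<Rightarrow> real"
  assumes lx: "l < x0" and cu: "continuous_on {l..x0} u" and u0: "u x0 \<le> 0" and d: "\<delta> > 0"
    and near: "\<And>x. l < x \<Longrightarrow> x \<le> l + \<delta> \<Longrightarrow> u x > 0"
  shows "\<exists>t1. l < t1 \<and> t1 \<le> x0 \<and> u t1 = 0 \<and> (\<forall>x. l < x \<and> x < t1 \<longrightarrow> u x > 0)"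
proof -
  have x0d: "l + \<delta> < x0" using near[of x0] u0 lx by force
  define T where "T = {l + \<delta>..x0} \<inter> u -` {..0}"
  have cT: "closed T" unfolding T_def
    by (rule continuous_closed_preimage[OF continuous_on_subset[OF cu]]) (use d in auto)
  have "x0 \<in> T" using x0d u0 unfolding T_def by auto
  then have neT: "T \<noteq> {}" by auto
  have bT: "bdd_below T" unfolding T_def by (rule bdd_belowI[of _ "l + \<delta>"]) auto
  define t1 where "t1 = Inf T"
  have t1T: "t1 \<in> T" unfolding t1_def by (rule closed_contains_Inf[OF neT bT cT])
  have t1: "l + \<delta> \<le> t1" "t1 \<le> x0" "u t1 \<le> 0" using t1T unfolding T_def by auto
  have pos: "u x > 0" if "l < x" "x < t1" for x
  proof (cases "x \<le> l + \<delta>")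
    case True then show ?thesis using near that by auto
  next
    case False
    have "x \<notin> T"
    proof
      assume "x \<in> T"
      then have "t1 \<le> x" unfolding t1_def by (rule cInf_lower[OF _ bT])
      with that show False by simp
    qed
    then show ?thesis using False that t1 unfolding T_def by force
  qed
  have "u t1 = 0"
  proof (rule ccontr)
    assume "u t1 \<noteq> 0"
    then have neg: "u t1 < 0" using t1 by simp
    define m where "m = l + \<delta> / 2"
    have m: "l < m" "m < t1" "m \<le> l + \<delta>" using d t1 unfolding m_def by auto
    have "u m > 0" using near m by auto
    then obtain z where z: "m \<le> z" "z \<le> t1" "u z = 0"
      using IVT2'[of u t1 0 m] neg m continuous_on_subset[OF cu, of "{m..t1}"] t1 by force
    have "z \<noteq> t1" using z neg by auto
    then show False using pos[of z] z m by auto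
  qed
  then show ?thesis using t1 pos d by (intro exI[of _ t1]) auto
qed

definition qq :: "real \<Rightarrow> (real \<Rightarrow> real) \<Rightarrow> real \<Rightarrow> real \<Rightarrow> real" where
  "qq \<epsilon> V \<nu> t = (V t - \<nu>) / (2 * \<epsilon>\<^sup>2)"

definition sol :: "real \<Rightarrow> (real \<Rightarrow> real) \<Rightarrow> real \<Rightarrow> real \<Rightarrow> real \<Rightarrow> (real \<Rightarrow> real) \<times> (real \<Rightarrow> real)" where
  "sol \<epsilon> V l R \<nu> = (SOME p. fst p l = 0 \<and> snd p l = 1 \<and> (\<forall>x\<in>{l..R}.
      (fst p has_real_derivative snd p x) (at x within {l..R}) \<and>
      (snd p has_real_derivative qq \<epsilon> V \<nu> x * fst p x) (at x within {l..R})))"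

lemma sol_prop:
  assumes "l \<le> R" "continuous_on UNIV V"
  shows "fst (sol \<epsilon> V l R \<nu>) l = 0 \<and> snd (sol \<epsilon> V l R \<nu>) l = 1 \<and> (\<forall>x\<in>{l..R}.
      (fst (sol \<epsilon> V l R \<nu>) has_real_derivative snd (sol \<epsilon> V l R \<nu>) x) (at x within {l..R}) \<and>
      (snd (sol \<epsilon> V l R \<nu>) has_real_derivative qq \<epsilon> V \<nu> x * fst (sol \<epsilon> V l R \<nu>) x) (at x within {l..R}))"
proof -
  have "continuous_on {l..R} (qq \<epsilon> V \<nu>)" unfolding qq_def divide_inverse
    using continuous_on_subset[OF assms(2)] by (intro continuous_intros) auto
  from ode_exists[OF assms(1) this] obtain y z where
    "y l = 0 \<and> z l = 1 \<and> (\<forall>x\<in>{l..R}. (y has_real_derivative z x) (at x within {l..R}) \<and>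
      (z has_real_derivative qq \<epsilon> V \<nu> x * y x) (at x within {l..R}))" by blast
  then have "\<exists>p. fst p l = 0 \<and> snd p l = 1 \<and> (\<forall>x\<in>{l..R}.
      (fst p has_real_derivative snd p x) (at x within {l..R}) \<and>
      (snd p has_real_derivative qq \<epsilon> V \<nu> x * fst p x) (at x within {l..R}))"
    by (intro exI[of _ "(y, z)"]) simp
  then show ?thesis unfolding sol_def by (rule someI_ex)
qed

lemma sq_ineq1: "2 * a * b \<le> a\<^sup>2 + (b::real)\<^sup>2"
  using sum_squares_bound by (simp add: power2_eq_square)

lemma sq_ineq2:
  fixes a b q Q :: real
  assumes "\<bar>q\<bar> \<le> Q"
  shows "2 * a * q * b \<le> Q * (a\<^sup>2 + b\<^sup>2)"
proof -
  have "2 * a * q * b \<le> \<bar>q\<bar> * (2 * \<bar>a\<bar> * \<bar>b\<bar>)" by (simp add: abs_mult[symmetric] mult_ac)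
  also have "\<dots> \<le> \<bar>q\<bar> * (a\<^sup>2 + b\<^sup>2)" using sq_ineq1[of "\<bar>a\<bar>" "\<bar>b\<bar>"] by (intro mult_left_mono) auto
  also have "\<dots> \<le> Q * (a\<^sup>2 + b\<^sup>2)" using assms by (intro mult_right_mono) auto
  finally show ?thesis .
qed

locale shoot =
  fixes \<epsilon> :: real and V :: "real \<Rightarrow> real" and l r :: real
  assumes eps: "\<epsilon> > 0" and Vc: "continuous_on UNIV V" and lr: "l < r"
begin

abbreviation "R \<equiv> r + 1"
definition "Y \<nu> = fst (sol \<epsilon> V l R \<nu>)"
definition "Z \<nu> = snd (sol \<epsilon> V l R \<nu>)"
abbreviation "q \<equiv> qq \<epsilon> V"

lemma lR: "l \<le> R" using lr by simp

lemma YZ0: "Y \<nu> l = 0" "Z \<nu> l = 1"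
  using sol_prop[OF lR Vc] unfolding Y_def Z_def by auto

lemma dYw: "x \<in> {l..R} \<Longrightarrow> (Y \<nu> has_real_derivative Z \<nu> x) (at x within {l..R})"
  and dZw: "x \<in> {l..R} \<Longrightarrow> (Z \<nu> has_real_derivative q \<nu> x * Y \<nu> x) (at x within {l..R})"
  using sol_prop[OF lR Vc] unfolding Y_def Z_def by auto

lemma dY: "l < x \<Longrightarrow> x < R \<Longrightarrow> (Y \<nu> has_real_derivative Z \<nu> x) (at x)"
  and dZ: "l < x \<Longrightarrow> x < R \<Longrightarrow> (Z \<nu> has_real_derivative q \<nu> x * Y \<nu> x) (at x)"
  using dYw[of x \<nu>] dZw[of x \<nu>] at_within_Icc_at[of l x R] by auto

lemma cY: "continuous_on {l..R} (Y \<nu>)" and cZ: "continuous_on {l..R} (Z \<nu>)"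
  using DERIV_continuous_on[OF dYw] DERIV_continuous_on[OF dZw] by auto

lemma cq: "continuous_on {l..R} (q \<nu>)"
  unfolding qq_def divide_inverse using continuous_on_subset[OF Vc] by (intro continuous_intros) auto

lemma q_diff: "q \<nu> t - q \<nu>' t = (\<nu>' - \<nu>) / (2 * \<epsilon>\<^sup>2)"
proof -
  have "q \<nu> t - q \<nu>' t = ((V t - \<nu>) - (V t - \<nu>')) / (2 * \<epsilon>\<^sup>2)"
    unfolding qq_def by (rule diff_divide_distrib[symmetric])
  then show ?thesis by simp
qed

lemma wronski:
  assumes "l < x" "x < R"
  shows "((\<lambda>x. Z \<nu> x * Y \<nu>' x - Y \<nu> x * Z \<nu>' x) has_real_derivative
     ((\<nu>' - \<nu>) / (2 * \<epsilon>\<^sup>2)) * Y \<nu> x * Y \<nu>' x) (at x)"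
proof -
  have "((\<lambda>x. Z \<nu> x * Y \<nu>' x - Y \<nu> x * Z \<nu>' x) has_real_derivative
     (q \<nu> x * Y \<nu> x * Y \<nu>' x + Z \<nu>' x * Z \<nu> x) - (Z \<nu> x * Z \<nu>' x + q \<nu>' x * Y \<nu>' x * Y \<nu> x)) (at x)"
    by (intro DERIV_diff DERIV_mult dY dZ assms)
  moreover have "(q \<nu> x * Y \<nu> x * Y \<nu>' x + Z \<nu>' x * Z \<nu> x) - (Z \<nu> x * Z \<nu>' x + q \<nu>' x * Y \<nu>' x * Y \<nu> x)
      = (q \<nu> x - q \<nu>' x) * Y \<nu> x * Y \<nu>' x" by (simp add: algebra_simps)
  ultimately show ?thesis unfolding q_diff by simp
qed

lemma cW: "continuous_on {l..R} (\<lambda>x. Z \<nu> x * Y \<nu>' x - Y \<nu> x * Z \<nu>' x)"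
  using cY cZ by (intro continuous_intros)

lemma q_bound:
  obtains Qb where "Qb \<ge> 0" "\<And>\<nu> t. \<nu> \<in> {\<nu>1..\<nu>2} \<Longrightarrow> t \<in> {l..R} \<Longrightarrow> \<bar>q \<nu> t\<bar> \<le> Qb"
proof -
  obtain Vb where Vb: "Vb \<ge> 0" "\<And>t. t \<in> {l..R} \<Longrightarrow> \<bar>V t\<bar> \<le> Vb"
    using cont_bounded_Icc[OF continuous_on_subset[OF Vc]] by blast
  define Qb where "Qb = (Vb + \<bar>\<nu>1\<bar> + \<bar>\<nu>2\<bar>) / (2 * \<epsilon>\<^sup>2)"
  have "\<bar>q \<nu> t\<bar> \<le> Qb" if "\<nu> \<in> {\<nu>1..\<nu>2}" "t \<in> {l..R}" for \<nu> t
  proof -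
    have "\<bar>V t - \<nu>\<bar> \<le> Vb + \<bar>\<nu>1\<bar> + \<bar>\<nu>2\<bar>" using Vb(2)[OF that(2)] that(1) by auto
    moreover have "\<bar>q \<nu> t\<bar> = \<bar>V t - \<nu>\<bar> / (2 * \<epsilon>\<^sup>2)"
      unfolding qq_def abs_divide by simp
    ultimately show ?thesis unfolding Qb_def
      by (metis divide_right_mono zero_le_power2 mult_nonneg_nonneg zero_le_numeral)
  qed
  moreover have "Qb \<ge> 0" unfolding Qb_def using Vb by auto
  ultimately show ?thesis using that by blast
qed

lemma abs_le_1_sq: "\<bar>a::real\<bar> \<le> 1 + a\<^sup>2"
proof -
  have "0 \<le> (\<bar>a\<bar> - 1)\<^sup>2" by simp
  then show ?thesis by (simp add: power2_diff power2_abs)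
qed

lemma energy_bound:
  obtains S where "S > 0" "\<And>\<nu> x. \<nu> \<in> {\<nu>1..\<nu>2} \<Longrightarrow> x \<in> {l..R} \<Longrightarrow> \<bar>Y \<nu> x\<bar> \<le> S \<and> \<bar>Z \<nu> x\<bar> \<le> S"
proof -
  obtain Qb where Qb: "Qb \<ge> 0" "\<And>\<nu> t. \<nu> \<in> {\<nu>1..\<nu>2} \<Longrightarrow> t \<in> {l..R} \<Longrightarrow> \<bar>q \<nu> t\<bar> \<le> Qb"
    using q_bound by blast
  define K where "K = 1 + Qb"
  define S where "S = 1 + exp (K * (R - l))"
  have "\<bar>Y \<nu> x\<bar> \<le> S \<and> \<bar>Z \<nu> x\<bar> \<le> S" if nu: "\<nu> \<in> {\<nu>1..\<nu>2}" and x: "x \<in> {l..R}" for \<nu> x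
  proof -
    define E where "E = (\<lambda>x. Y \<nu> x * Y \<nu> x + Z \<nu> x * Z \<nu> x)"
    have "E x \<le> (E l + 0 / K) * exp (K * (x - l))"
    proof (rule gronwall)
      show "l \<le> x" using x by auto
      show "continuous_on {l..x} E" unfolding E_def
        using continuous_on_subset[OF cY] continuous_on_subset[OF cZ] x by (intro continuous_intros) auto
      fix t assume t: "l < t" "t < x"
      then have tR: "l < t" "t < R" using x by auto
      show "(E has_real_derivative (Z \<nu> t * Y \<nu> t + Z \<nu> t * Y \<nu> t) + (q \<nu> t * Y \<nu> t * Z \<nu> t + q \<nu> t * Y \<nu> t * Z \<nu> t)) (at t)"
        unfolding E_def by (intro DERIV_add DERIV_mult dY dZ tR)
      have "2 * Y \<nu> t * Z \<nu> t \<le> (Y \<nu> t)\<^sup>2 + (Z \<nu> t)\<^sup>2" by (rule sq_ineq1)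
      moreover have "2 * Z \<nu> t * q \<nu> t * Y \<nu> t \<le> Qb * ((Z \<nu> t)\<^sup>2 + (Y \<nu> t)\<^sup>2)"
        by (rule sq_ineq2) (use Qb(2)[OF nu] tR in auto)
      ultimately show "(Z \<nu> t * Y \<nu> t + Z \<nu> t * Y \<nu> t) + (q \<nu> t * Y \<nu> t * Z \<nu> t + q \<nu> t * Y \<nu> t * Z \<nu> t) \<le> K * E t + 0"
        unfolding K_def E_def by (simp add: power2_eq_square algebra_simps)
    qed (use Qb in \<open>auto simp: K_def\<close>)
    also have "\<dots> = exp (K * (x - l))" unfolding E_def using YZ0 by simp
    also have "\<dots> \<le> exp (K * (R - l))" using x Qb by (auto simp: K_def intro!: mult_left_mono)
    finally have E: "E x \<le> exp (K * (R - l))" .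
    have "\<bar>Y \<nu> x\<bar> \<le> 1 + (Y \<nu> x)\<^sup>2" "\<bar>Z \<nu> x\<bar> \<le> 1 + (Z \<nu> x)\<^sup>2" by (rule abs_le_1_sq)+
    moreover have "(Y \<nu> x)\<^sup>2 \<ge> 0" "(Z \<nu> x)\<^sup>2 \<ge> 0" by simp_all
    ultimately show ?thesis using E unfolding E_def S_def power2_eq_square by linarith
  qed
  moreover have "S > 0" unfolding S_def by (simp add: add_pos_pos)
  ultimately show ?thesis using that by blast
qed

lemma lip_bound:
  obtains L where "L \<ge> 0" "\<And>\<nu> \<nu>' x. \<nu> \<in> {\<nu>1..\<nu>2} \<Longrightarrow> \<nu>' \<in> {\<nu>1..\<nu>2} \<Longrightarrow> x \<in> {l..R} \<Longrightarrow>
     \<bar>Y \<nu> x - Y \<nu>' x\<bar> \<le> L * \<bar>\<nu> - \<nu>'\<bar>"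
proof -
  obtain Qb where Qb: "Qb \<ge> 0" "\<And>\<nu> t. \<nu> \<in> {\<nu>1..\<nu>2} \<Longrightarrow> t \<in> {l..R} \<Longrightarrow> \<bar>q \<nu> t\<bar> \<le> Qb"
    using q_bound by blast
  obtain S where S: "S > 0" "\<And>\<nu> x. \<nu> \<in> {\<nu>1..\<nu>2} \<Longrightarrow> x \<in> {l..R} \<Longrightarrow> \<bar>Y \<nu> x\<bar> \<le> S \<and> \<bar>Z \<nu> x\<bar> \<le> S"
    using energy_bound by blast
  define K where "K = 2 + Qb"
  define L0 where "L0 = S * exp (K * (R - l))"
  define L where "L = L0 / (2 * \<epsilon>\<^sup>2)"
  have "\<bar>Y \<nu> x - Y \<nu>' x\<bar> \<le> L * \<bar>\<nu> - \<nu>'\<bar>"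
    if nu: "\<nu> \<in> {\<nu>1..\<nu>2}" "\<nu>' \<in> {\<nu>1..\<nu>2}" and x: "x \<in> {l..R}" for \<nu> \<nu>' x
  proof -
    define c where "c = (\<nu>' - \<nu>) / (2 * \<epsilon>\<^sup>2)"
    define D where "D = (\<lambda>x. Y \<nu> x - Y \<nu>' x)"
    define F where "F = (\<lambda>x. Z \<nu> x - Z \<nu>' x)"
    define E where "E = (\<lambda>x. D x * D x + F x * F x)"
    have "E x \<le> (E l + (c\<^sup>2 * S\<^sup>2) / K) * exp (K * (x - l))"
    proof (rule gronwall)
      show "l \<le> x" using x by auto
      show "continuous_on {l..x} E" unfolding E_def D_def F_def
        using continuous_on_subset[OF cY] continuous_on_subset[OF cZ] x by (intro continuous_intros) auto
      fix t assume t: "l < t" "t < x"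
      then have tR: "l < t" "t < R" using x by auto
      have dD: "(D has_real_derivative F t) (at t)" unfolding D_def F_def by (intro DERIV_diff dY tR)
      have dF: "(F has_real_derivative q \<nu> t * D t + c * Y \<nu>' t) (at t)"
      proof -
        have "(F has_real_derivative q \<nu> t * Y \<nu> t - q \<nu>' t * Y \<nu>' t) (at t)"
          unfolding F_def by (intro DERIV_diff dZ tR)
        moreover have "q \<nu> t * Y \<nu> t - q \<nu>' t * Y \<nu>' t = q \<nu> t * D t + (q \<nu> t - q \<nu>' t) * Y \<nu>' t"
          unfolding D_def by (simp add: algebra_simps)
        ultimately show ?thesis unfolding q_diff c_def by simp
      qed
      show "(E has_real_derivative (F t * D t + F t * D t) + ((q \<nu> t * D t + c * Y \<nu>' t) * F t + (q \<nu> t * D t + c * Y \<nu>' t) * F t)) (at t)"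
        unfolding E_def by (intro DERIV_add DERIV_mult dD dF)
      have i1: "2 * D t * F t \<le> (D t)\<^sup>2 + (F t)\<^sup>2" by (rule sq_ineq1)
      have i2: "2 * F t * q \<nu> t * D t \<le> Qb * ((F t)\<^sup>2 + (D t)\<^sup>2)"
        by (rule sq_ineq2) (use Qb(2)[OF nu(1)] tR in auto)
      have i3: "2 * F t * (c * Y \<nu>' t) \<le> (F t)\<^sup>2 + (c * Y \<nu>' t)\<^sup>2" by (rule sq_ineq1)
      have "(c * Y \<nu>' t)\<^sup>2 = c\<^sup>2 * (Y \<nu>' t)\<^sup>2" by (simp add: power_mult_distrib)
      also have "\<dots> \<le> c\<^sup>2 * S\<^sup>2"
      proof (rule mult_left_mono)
        have "\<bar>Y \<nu>' t\<bar> \<le> S" using S(2)[OF nu(2), of t] tR by auto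
        then show "(Y \<nu>' t)\<^sup>2 \<le> S\<^sup>2" by (metis abs_le_square_iff abs_of_pos S(1))
      qed simp
      finally have i4: "(c * Y \<nu>' t)\<^sup>2 \<le> c\<^sup>2 * S\<^sup>2" .
      have eq: "(F t * D t + F t * D t) + ((q \<nu> t * D t + c * Y \<nu>' t) * F t + (q \<nu> t * D t + c * Y \<nu>' t) * F t)
         = 2 * D t * F t + 2 * F t * q \<nu> t * D t + 2 * F t * (c * Y \<nu>' t)" by (simp add: algebra_simps)
      have eq2: "K * E t = 2 * ((D t)\<^sup>2 + (F t)\<^sup>2) + Qb * ((F t)\<^sup>2 + (D t)\<^sup>2)"
        unfolding K_def E_def by (simp add: power2_eq_square algebra_simps)
      show "(F t * D t + F t * D t) + ((q \<nu> t * D t + c * Y \<nu>' t) * F t + (q \<nu> t * D t + c * Y \<nu>' t) * F t)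
         \<le> K * E t + c\<^sup>2 * S\<^sup>2"
        unfolding eq eq2 using i1 i2 i3 i4 by (smt (verit) zero_le_power2)
    qed (use Qb in \<open>auto simp: K_def\<close>)
    also have "\<dots> = (c\<^sup>2 * S\<^sup>2) / K * exp (K * (x - l))" unfolding E_def D_def F_def using YZ0 by simp
    also have "\<dots> \<le> c\<^sup>2 * S\<^sup>2 * exp (K * (R - l))"
    proof -
      have K1: "K \<ge> 1" unfolding K_def using Qb by simp
      have "(c\<^sup>2 * S\<^sup>2) / K \<le> (c\<^sup>2 * S\<^sup>2) / 1" using K1
        by (intro frac_le) auto
      moreover have "exp (K * (x - l)) \<le> exp (K * (R - l))" using x K1 by (auto intro!: mult_left_mono)
      ultimately show ?thesis by (intro mult_mono) auto
    qed
    also have "\<dots> \<le> (c * L0)\<^sup>2"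
    proof -
      have "exp (K * (R - l)) \<ge> 1" using lR Qb unfolding K_def by simp
      then have "exp (K * (R - l)) \<le> (exp (K * (R - l)))\<^sup>2" by (simp add: power2_eq_square)
      then have "c\<^sup>2 * S\<^sup>2 * exp (K * (R - l)) \<le> c\<^sup>2 * S\<^sup>2 * (exp (K * (R - l)))\<^sup>2"
        by (intro mult_left_mono) auto
      then show ?thesis unfolding L0_def power_mult_distrib by (simp add: mult.assoc)
    qed
    finally have "(D x)\<^sup>2 \<le> (c * L0)\<^sup>2" unfolding E_def power2_eq_square
      by (smt (verit) zero_le_square)
    then have "\<bar>D x\<bar> \<le> \<bar>c * L0\<bar>" by (simp add: abs_le_square_iff)
    also have "\<dots> = L * \<bar>\<nu> - \<nu>'\<bar>" unfolding c_def L_def L0_def abs_mult using S(1)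
      by (simp add: abs_divide abs_minus_commute)
    finally show ?thesis unfolding D_def .
  qed
  moreover have "L \<ge> 0" unfolding L_def L0_def using S by simp
  ultimately show ?thesis using that by blast
qed

lemma near_pos:
  obtains \<delta> where "\<delta> > 0" "\<delta> \<le> r - l" "\<And>\<nu> x. \<nu> \<in> {\<nu>1..\<nu>2} \<Longrightarrow> l < x \<Longrightarrow> x \<le> l + \<delta> \<Longrightarrow> Y \<nu> x > 0"
proof -
  obtain Qb where Qb: "Qb \<ge> 0" "\<And>\<nu> t. \<nu> \<in> {\<nu>1..\<nu>2} \<Longrightarrow> t \<in> {l..R} \<Longrightarrow> \<bar>q \<nu> t\<bar> \<le> Qb"
    using q_bound by blast
  obtain S where S: "S > 0" "\<And>\<nu> x. \<nu> \<in> {\<nu>1..\<nu>2} \<Longrightarrow> x \<in> {l..R} \<Longrightarrow> \<bar>Y \<nu> x\<bar> \<le> S \<and> \<bar>Z \<nu> x\<bar> \<le> S"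
    using energy_bound by blast
  define \<delta> where "\<delta> = min (r - l) (1 / (2 * Qb * S + 1))"
  have d: "\<delta> > 0" "\<delta> \<le> r - l" "\<delta> \<le> 1 / (2 * Qb * S + 1)"
    unfolding \<delta>_def using lr Qb S by (auto intro!: add_nonneg_pos)
  have Zpos: "Z \<nu> t \<ge> 1/2" if nu: "\<nu> \<in> {\<nu>1..\<nu>2}" and t: "l < t" "t \<le> l + \<delta>" for \<nu> t
  proof -
    have "\<exists>z. l < z \<and> z < t \<and> Z \<nu> t - Z \<nu> l = (t - l) * (q \<nu> z * Y \<nu> z)"
      by (rule mvt_open[OF t(1) continuous_on_subset[OF cZ[of \<nu>]]]) (use t d lr in \<open>auto intro!: dZ\<close>)
    then obtain z where z: "l < z" "z < t" "Z \<nu> t - Z \<nu> l = (t - l) * (q \<nu> z * Y \<nu> z)" by blast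
    have zR: "z \<in> {l..R}" using z t d by auto
    have qy: "\<bar>q \<nu> z * Y \<nu> z\<bar> \<le> Qb * S" unfolding abs_mult
      using Qb(2)[OF nu zR] S(2)[OF nu zR] Qb(1) by (intro mult_mono) auto
    have "\<bar>(t - l) * (q \<nu> z * Y \<nu> z)\<bar> \<le> \<delta> * (Qb * S)" unfolding abs_mult[of "t - l"]
      using t d by (intro mult_mono[OF _ qy]) auto
    also have "\<dots> \<le> 1 / (2 * Qb * S + 1) * (Qb * S)" using d Qb S by (intro mult_right_mono) auto
    also have "\<dots> \<le> 1 / 2"
    proof -
      have a0: "0 \<le> Qb * S" using Qb S by simp
      have aux: "0 \<le> a \<Longrightarrow> 1 / (2 * a + 1) * a \<le> 1 / 2" for a :: real
      proof -
        assume "0 \<le> a"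
        then have "0 < 2 * a + 1" by simp
        then show ?thesis by (simp add: field_simps)
      qed
      show ?thesis using aux[OF a0] by (simp add: mult.assoc)
    qed
    finally have "- (1/2) \<le> (t - l) * (q \<nu> z * Y \<nu> z)" by (simp add: abs_le_iff)
    then show ?thesis using z(3) YZ0(2)[of \<nu>] by linarith
  qed
  have "Y \<nu> x > 0" if nu: "\<nu> \<in> {\<nu>1..\<nu>2}" and x: "l < x" "x \<le> l + \<delta>" for \<nu> x
  proof -
    have "\<exists>z. l < z \<and> z < x \<and> Y \<nu> x - Y \<nu> l = (x - l) * Z \<nu> z"
      by (rule mvt_open[OF x(1) continuous_on_subset[OF cY[of \<nu>]]]) (use x d lr in \<open>auto intro!: dY\<close>)
    then obtain z where z: "l < z" "z < x" "Y \<nu> x - Y \<nu> l = (x - l) * Z \<nu> z" by blast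
    have "Z \<nu> z \<ge> 1/2" using Zpos[OF nu z(1)] z x by auto
    then show ?thesis using z x YZ0 by (simp add: zero_less_mult_iff)
  qed
  then show ?thesis using that d by blast
qed

definition "Pos \<nu> \<longleftrightarrow> (\<forall>x. l < x \<and> x \<le> r \<longrightarrow> Y \<nu> x > 0)"

lemma pos_low:
  assumes Vge: "\<And>t. l \<le> t \<Longrightarrow> t \<le> r \<Longrightarrow> V t \<ge> \<nu>"
  shows "Pos \<nu>"
  unfolding Pos_def
proof (intro allI impI, rule ccontr)
  fix x0 assume x0: "l < x0 \<and> x0 \<le> r" "\<not> 0 < Y \<nu> x0"
  obtain \<delta> where d: "\<delta> > 0" "\<delta> \<le> r - l" "\<And>x. l < x \<Longrightarrow> x \<le> l + \<delta> \<Longrightarrow> Y \<nu> x > 0"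
  proof -
    obtain \<delta> where "\<delta> > 0" "\<delta> \<le> r - l" "\<And>n x. n \<in> {\<nu>..\<nu>} \<Longrightarrow> l < x \<Longrightarrow> x \<le> l + \<delta> \<Longrightarrow> Y n x > 0"
      using near_pos[of \<nu> \<nu>] by blast
    then show ?thesis using that[of \<delta>] by auto
  qed
  obtain t1 where t1: "l < t1" "t1 \<le> x0" "Y \<nu> t1 = 0" "\<And>x. l < x \<Longrightarrow> x < t1 \<Longrightarrow> Y \<nu> x > 0"
    using first_zero[of l x0 "Y \<nu>" \<delta>] x0 d continuous_on_subset[OF cY[of \<nu>], of "{l..x0}"] by force
  have Z1: "Z \<nu> t \<ge> 1" if t: "l < t" "t < t1" for t
  proof -
    have "Z \<nu> l \<le> Z \<nu> t"
    proof (rule DERIV_nonneg_imp_increasing_open[of l t])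
      show "l \<le> t" using t by simp
      show "continuous_on {l..t} (Z \<nu>)" by (rule continuous_on_subset[OF cZ]) (use t t1 x0 in auto)
      fix x assume x: "l < x" "x < t"
      have "q \<nu> x \<ge> 0" unfolding qq_def using Vge[of x] x t t1 x0 by auto
      moreover have "Y \<nu> x > 0" using t1(4)[of x] x t by auto
      ultimately show "\<exists>y. DERIV (Z \<nu>) x :> y \<and> 0 \<le> y" using dZ[of x \<nu>] x t t1 x0 by force
    qed
    then show ?thesis using YZ0 by simp
  qed
  have "\<exists>z. l < z \<and> z < t1 \<and> Y \<nu> t1 - Y \<nu> l = (t1 - l) * Z \<nu> z"
    by (rule mvt_open[OF t1(1) continuous_on_subset[OF cY[of \<nu>]]]) (use t1 x0 in \<open>auto intro!: dY\<close>)
  then obtain z where z: "l < z" "z < t1" "Y \<nu> t1 - Y \<nu> l = (t1 - l) * Z \<nu> z" by blast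
  have "(t1 - l) * Z \<nu> z > 0" using Z1[OF z(1,2)] t1(1) by simp
  then show False using z(3) t1(3) YZ0(1)[of \<nu>] by simp
qed

lemma pos_down:
  assumes lt: "\<nu>' < \<nu>" and P: "Pos \<nu>"
  shows "Pos \<nu>'"
  unfolding Pos_def
proof (intro allI impI, rule ccontr)
  fix x0 assume x0: "l < x0 \<and> x0 \<le> r" "\<not> 0 < Y \<nu>' x0"
  obtain \<delta> where d: "\<delta> > 0" "\<delta> \<le> r - l" "\<And>x. l < x \<Longrightarrow> x \<le> l + \<delta> \<Longrightarrow> Y \<nu>' x > 0"
  proof -
    obtain \<delta> where "\<delta> > 0" "\<delta> \<le> r - l" "\<And>n x. n \<in> {\<nu>'..\<nu>'} \<Longrightarrow> l < x \<Longrightarrow> x \<le> l + \<delta> \<Longrightarrow> Y n x > 0"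
      using near_pos[of \<nu>' \<nu>'] by blast
    then show ?thesis using that[of \<delta>] by auto
  qed
  obtain t1 where t1: "l < t1" "t1 \<le> x0" "Y \<nu>' t1 = 0" "\<And>x. l < x \<Longrightarrow> x < t1 \<Longrightarrow> Y \<nu>' x > 0"
    using first_zero[of l x0 "Y \<nu>'" \<delta>] x0 d continuous_on_subset[OF cY[of \<nu>'], of "{l..x0}"] by force
  define W where "W = (\<lambda>x. Z \<nu>' x * Y \<nu> x - Y \<nu>' x * Z \<nu> x)"
  have "W l < W t1"
  proof (rule DERIV_pos_imp_increasing_open[OF t1(1)])
    show "continuous_on {l..t1} W" unfolding W_def by (rule continuous_on_subset[OF cW]) (use t1 x0 in auto)
    fix x assume x: "l < x" "x < t1"
    have "((\<nu> - \<nu>') / (2 * \<epsilon>\<^sup>2)) * Y \<nu>' x * Y \<nu> x > 0"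
      using t1(4)[OF x] P x t1 x0 lt eps unfolding Pos_def by (intro mult_pos_pos divide_pos_pos) auto
    then show "\<exists>y. DERIV W x :> y \<and> 0 < y" unfolding W_def
      using wronski[of x \<nu>' \<nu>] x t1 x0 by force
  qed
  then have "Z \<nu>' t1 * Y \<nu> t1 > 0" unfolding W_def using YZ0 t1(3) by simp
  moreover have "Y \<nu> t1 > 0" using P t1 x0 unfolding Pos_def by auto
  ultimately have Zp: "Z \<nu>' t1 > 0" by (simp add: zero_less_mult_iff)
  obtain dd where dd: "dd > 0" "\<And>h. h > 0 \<Longrightarrow> h < dd \<Longrightarrow> Y \<nu>' (t1 - h) < Y \<nu>' t1"
    using DERIV_pos_inc_left[OF dY[of t1 \<nu>'] Zp] t1 x0 by force
  define h where "h = min dd (t1 - l) / 2"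
  have h: "h > 0" "h < dd" "h < t1 - l" using dd t1 unfolding h_def by auto
  have "Y \<nu>' (t1 - h) < 0" using dd(2)[OF h(1,2)] t1(3) by simp
  moreover have "Y \<nu>' (t1 - h) > 0" using t1(4)[of "t1 - h"] h by auto
  ultimately show False by simp
qed

lemma not_pos_mu:
  fixes f f' f'' :: "real \<Rightarrow> real"
  assumes cd: "l < c" "c < d" "d \<le> r"
    and cf: "continuous_on {c..d} f" and fc: "f c = 0" "f d = 0"
    and fpos: "\<And>x. c < x \<Longrightarrow> x < d \<Longrightarrow> f x > 0"
    and df: "\<And>x. c < x \<Longrightarrow> x < d \<Longrightarrow> (f has_real_derivative f' x) (at x)"
    and df': "\<And>x. c < x \<Longrightarrow> x < d \<Longrightarrow> (f' has_real_derivative f'' x) (at x)"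
    and sub: "\<And>x. c < x \<Longrightarrow> x < d \<Longrightarrow> f'' x \<ge> q \<mu> x * f x"
  shows "\<not> Pos \<mu>"
proof
  assume P: "Pos \<mu>"
  show False
  proof (rule sturm_contra[of c d f "Y \<mu>" f' f'' "Z \<mu>" "\<lambda>x. q \<mu> x * Y \<mu> x"])
    show "c < d" "continuous_on {c..d} f" "f c = 0" "f d = 0" by (fact cd cf fc)+
    show "continuous_on {c..d} (Y \<mu>)" by (rule continuous_on_subset[OF cY]) (use cd in auto)
    show "\<And>x. c < x \<Longrightarrow> x < d \<Longrightarrow> 0 < f x" by (fact fpos)
    show "\<And>x. c \<le> x \<Longrightarrow> x \<le> d \<Longrightarrow> 0 < Y \<mu> x" using P cd unfolding Pos_def by auto
    show "\<And>x. c < x \<Longrightarrow> x < d \<Longrightarrow> (f has_real_derivative f' x) (at x)" by (fact df)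
    show "\<And>x. c < x \<Longrightarrow> x < d \<Longrightarrow> (f' has_real_derivative f'' x) (at x)" by (fact df')
    show "\<And>x. c < x \<Longrightarrow> x < d \<Longrightarrow> (Y \<mu> has_real_derivative Z \<mu> x) (at x)" using cd by (intro dY) auto
    show "\<And>x. c < x \<Longrightarrow> x < d \<Longrightarrow> (Z \<mu> has_real_derivative q \<mu> x * Y \<mu> x) (at x)" using cd by (intro dZ) auto
    fix x assume x: "c < x" "x < d"
    have "Y \<mu> x > 0" using P cd x unfolding Pos_def by auto
    then have "0 \<le> (f'' x - q \<mu> x * f x) * Y \<mu> x" using sub[OF x] by simp
    then show "0 \<le> f'' x * Y \<mu> x - f x * (q \<mu> x * Y \<mu> x)" by (simp add: algebra_simps)
  qed
qed

lemma shooting: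
  fixes f f' f'' :: "real \<Rightarrow> real"
  assumes Vge: "\<And>t. l \<le> t \<Longrightarrow> t \<le> r \<Longrightarrow> V t \<ge> \<nu>1"
    and cd: "l < c" "c < d" "d \<le> r"
    and cf: "continuous_on {c..d} f" and fc: "f c = 0" "f d = 0"
    and fpos: "\<And>x. c < x \<Longrightarrow> x < d \<Longrightarrow> f x > 0"
    and df: "\<And>x. c < x \<Longrightarrow> x < d \<Longrightarrow> (f has_real_derivative f' x) (at x)"
    and df': "\<And>x. c < x \<Longrightarrow> x < d \<Longrightarrow> (f' has_real_derivative f'' x) (at x)"
    and sub: "\<And>x. c < x \<Longrightarrow> x < d \<Longrightarrow> f'' x \<ge> q \<mu> x * f x"
  shows "\<exists>\<nu>\<le>\<mu>. \<nu> \<in> dirichlet_eigenvalues \<epsilon> V l r"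
proof -
  have P1: "Pos \<nu>1" by (rule pos_low[OF Vge])
  have nPmu: "\<not> Pos \<mu>" by (rule not_pos_mu[OF cd cf fc fpos df df' sub])
  have n1mu: "\<nu>1 < \<mu>"
  proof (rule ccontr)
    assume "\<not> \<nu>1 < \<mu>"
    then have "\<mu> \<le> \<nu>1" by simp
    then have "Pos \<mu>" using P1 pos_down[of \<mu> \<nu>1] by (cases "\<mu> = \<nu>1") auto
    with nPmu show False by simp
  qed
  obtain L where L: "L \<ge> 0" "\<And>\<nu> \<nu>' x. \<nu> \<in> {\<nu>1..\<mu>} \<Longrightarrow> \<nu>' \<in> {\<nu>1..\<mu>} \<Longrightarrow> x \<in> {l..R} \<Longrightarrow>
     \<bar>Y \<nu> x - Y \<nu>' x\<bar> \<le> L * \<bar>\<nu> - \<nu>'\<bar>"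
    using lip_bound by blast
  obtain \<delta> where d: "\<delta> > 0" "\<delta> \<le> r - l" "\<And>\<nu> x. \<nu> \<in> {\<nu>1..\<mu>} \<Longrightarrow> l < x \<Longrightarrow> x \<le> l + \<delta> \<Longrightarrow> Y \<nu> x > 0"
    using near_pos by blast
  define Sp where "Sp = {\<nu> \<in> {\<nu>1..\<mu>}. Pos \<nu>}"
  have Sp1: "\<nu>1 \<in> Sp" unfolding Sp_def using P1 n1mu by auto
  have Spne: "Sp \<noteq> {}" using Sp1 by auto
  have Spb: "bdd_above Sp" unfolding Sp_def by (rule bdd_aboveI[of _ \<mu>]) auto
  define ns where "ns = Sup Sp"
  have ns: "\<nu>1 \<le> ns" "ns \<le> \<mu>"
    unfolding ns_def using cSup_upper[OF Sp1 Spb] cSup_least[OF Spne, of \<mu>] unfolding Sp_def by auto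
  have nsI: "ns \<in> {\<nu>1..\<mu>}" using ns by auto
  have e: "Y ns x \<ge> 0" if x: "l < x" "x \<le> r" for x
  proof (rule ccontr)
    assume "\<not> Y ns x \<ge> 0"
    then have neg: "Y ns x < 0" by simp
    define \<eta> where "\<eta> = - Y ns x / (L + 1)"
    have eta: "\<eta> > 0" unfolding \<eta>_def using neg L by (intro divide_pos_pos) auto
    have "ns - \<eta> < Sup Sp" using eta unfolding ns_def by simp
    then obtain \<nu> where nu: "\<nu> \<in> Sp" "ns - \<eta> < \<nu>" using less_cSupE[OF _ Spne] by blast
    have nu2: "\<nu> \<le> ns" unfolding ns_def by (rule cSup_upper[OF nu(1) Spb])
    have nuI: "\<nu> \<in> {\<nu>1..\<mu>}" using nu(1) unfolding Sp_def by auto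
    have "\<bar>Y \<nu> x - Y ns x\<bar> \<le> L * \<bar>\<nu> - ns\<bar>" using L(2)[OF nuI nsI] x by auto
    also have "\<dots> \<le> L * \<eta>" using nu nu2 L by (intro mult_left_mono) auto
    also have "\<dots> < (L + 1) * \<eta>" using eta by simp
    also have "\<dots> = - Y ns x" unfolding \<eta>_def using L by simp
    finally have "Y \<nu> x < 0" by simp
    moreover have "Pos \<nu>" using nu(1) unfolding Sp_def by auto
    ultimately show False using x unfolding Pos_def by force
  qed
  have nPns: "\<not> Pos ns"
  proof
    assume Pns: "Pos ns"
    have "ns \<noteq> \<mu>" using Pns nPmu by auto
    then have nsmu: "ns < \<mu>" using ns by simp
    have "\<exists>xm\<in>{l + \<delta>..r}. \<forall>y\<in>{l + \<delta>..r}. Y ns xm \<le> Y ns y"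
      by (rule continuous_attains_inf) (use d in \<open>auto intro!: continuous_on_subset[OF cY]\<close>)
    then obtain xm where xm: "xm \<in> {l + \<delta>..r}" "\<And>y. y \<in> {l + \<delta>..r} \<Longrightarrow> Y ns xm \<le> Y ns y" by blast
    define m where "m = Y ns xm"
    have m: "m > 0" unfolding m_def using Pns xm d unfolding Pos_def by auto
    define \<nu> where "\<nu> = min \<mu> (ns + m / (2 * (L + 1)))"
    have nu: "ns < \<nu>" "\<nu> \<le> \<mu>" "\<nu> - ns \<le> m / (2 * (L + 1))"
      unfolding \<nu>_def using nsmu m L by (auto intro!: divide_pos_pos)
    have nuI: "\<nu> \<in> {\<nu>1..\<mu>}" using nu ns by auto
    have "Pos \<nu>" unfolding Pos_def
    proof (intro allI impI)
      fix x assume x: "l < x \<and> x \<le> r"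
      show "Y \<nu> x > 0"
      proof (cases "x \<le> l + \<delta>")
        case True then show ?thesis using d(3)[OF nuI] x by auto
      next
        case False
        then have xI: "x \<in> {l + \<delta>..r}" using x by auto
        have "\<bar>Y \<nu> x - Y ns x\<bar> \<le> L * \<bar>\<nu> - ns\<bar>" using L(2)[OF nuI nsI] x by auto
        also have "\<dots> \<le> L * (m / (2 * (L + 1)))" using nu L by (intro mult_left_mono) auto
        also have "\<dots> < m"
        proof -
          have "L * (m / (2 * (L + 1))) = m * (L / (2 * (L + 1)))" by simp
          also have "\<dots> < m * 1" using m L by (intro mult_strict_left_mono) (auto simp: field_simps)
          finally show ?thesis by simp
        qed
        finally have "Y \<nu> x > Y ns x - m" by simp
        moreover have "Y ns x \<ge> m" unfolding m_def using xm(2)[OF xI] .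
        ultimately show ?thesis by simp
      qed
    qed
    then have "\<nu> \<in> Sp" unfolding Sp_def using nuI by auto
    then have "\<nu> \<le> ns" unfolding ns_def by (rule cSup_upper[OF _ Spb])
    with nu show False by simp
  qed
  then obtain x0 where x0: "l < x0" "x0 \<le> r" "Y ns x0 \<le> 0" unfolding Pos_def by force
  obtain t1 where t1: "l < t1" "t1 \<le> x0" "Y ns t1 = 0" "\<And>x. l < x \<Longrightarrow> x < t1 \<Longrightarrow> Y ns x > 0"
    using first_zero[of l x0 "Y ns" \<delta>] x0 d(1) d(3)[OF nsI] continuous_on_subset[OF cY[of ns], of "{l..x0}"] by force
  have t1r: "t1 = r"
  proof (rule ccontr)
    assume "t1 \<noteq> r"
    then have t1r: "t1 < r" using t1 x0 by simp
    define dd where "dd = min (t1 - l) (r - t1)"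
    have dd: "dd > 0" unfolding dd_def using t1 t1r by auto
    have Z0: "Z ns t1 = 0"
    proof (rule DERIV_local_min[OF dY[of t1 ns] dd])
      show "l < t1" "t1 < R" using t1 t1r by auto
      show "\<forall>y. \<bar>t1 - y\<bar> < dd \<longrightarrow> Y ns t1 \<le> Y ns y"
        using e t1(3) unfolding dd_def by (auto simp: abs_less_iff)
    qed
    have n1ns: "\<nu>1 < ns" using ns P1 nPns by (cases "\<nu>1 = ns") auto
    define W where "W = (\<lambda>x. Z ns x * Y \<nu>1 x - Y ns x * Z \<nu>1 x)"
    have "W l > W t1"
    proof (rule DERIV_neg_imp_decreasing_open[OF t1(1)])
      show "continuous_on {l..t1} W" unfolding W_def by (rule continuous_on_subset[OF cW]) (use t1 x0 in auto)
      fix x assume x: "l < x" "x < t1"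
      have "((\<nu>1 - ns) / (2 * \<epsilon>\<^sup>2)) * Y ns x * Y \<nu>1 x < 0"
      proof -
        have "(\<nu>1 - ns) / (2 * \<epsilon>\<^sup>2) < 0" using n1ns eps by (simp add: divide_neg_pos)
        moreover have "Y ns x * Y \<nu>1 x > 0" using t1(4)[OF x] P1 x t1 x0 unfolding Pos_def by simp
        ultimately show ?thesis by (metis mult.assoc mult_neg_pos)
      qed
      then show "\<exists>y. DERIV W x :> y \<and> y < 0" unfolding W_def
        using wronski[of x ns \<nu>1] x t1 x0 by force
    qed
    then show False unfolding W_def using YZ0 t1(3) Z0 by simp
  qed
  have mem: "ns \<in> dirichlet_eigenvalues \<epsilon> V l r"
    unfolding dirichlet_eigenvalues_def
  proof (intro CollectI exI conjI)
    show "continuous_on {l..r} (Y ns)" by (rule continuous_on_subset[OF cY]) auto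
    show "Y ns l = 0" by (rule YZ0)
    show "Y ns r = 0" using t1r t1 by simp
    show "\<exists>x\<in>{l<..<r}. Y ns x \<noteq> 0" using t1(4)[of "(l + r) / 2"] t1r lr
      by (intro bexI[of _ "(l + r) / 2"]) auto
    show "\<forall>x\<in>{l<..<r}. (Y ns has_real_derivative Z ns x) (at x) \<and>
        (Z ns has_real_derivative q ns x * Y ns x) (at x) \<and>
        - 2 * \<epsilon>\<^sup>2 * (q ns x * Y ns x) + V x * Y ns x = ns * Y ns x"
    proof
      fix x assume x: "x \<in> {l<..<r}"
      have "- 2 * \<epsilon>\<^sup>2 * (q ns x * Y ns x) = - (V x - ns) * Y ns x"
        unfolding qq_def using eps by (simp add: field_simps)
      then show "(Y ns has_real_derivative Z ns x) (at x) \<and>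
        (Z ns has_real_derivative q ns x * Y ns x) (at x) \<and>
        - 2 * \<epsilon>\<^sup>2 * (q ns x * Y ns x) + V x * Y ns x = ns * Y ns x"
        using x by (auto intro!: dY dZ simp: algebra_simps)
    qed
  qed
  then show ?thesis using ns by blast
qed

end

lemma nodal:
  fixes p :: "real \<Rightarrow> real"
  assumes cp: "continuous_on {l..r} p" and pl: "p l \<le> 0" and pr: "p r \<le> 0"
    and x0: "l < x0" "x0 < r" "p x0 > 0"
  shows "\<exists>c d. l \<le> c \<and> c < x0 \<and> x0 < d \<and> d \<le> r \<and> p c = 0 \<and> p d = 0 \<and> (\<forall>x. c < x \<and> x < d \<longrightarrow> p x > 0)"
proof -
  define T1 where "T1 = {l..x0} \<inter> p -` {..0}"
  define T2 where "T2 = {x0..r} \<inter> p -` {..0}"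
  have cT1: "closed T1" unfolding T1_def
    by (rule continuous_closed_preimage[OF continuous_on_subset[OF cp]]) (use x0 in auto)
  have cT2: "closed T2" unfolding T2_def
    by (rule continuous_closed_preimage[OF continuous_on_subset[OF cp]]) (use x0 in auto)
  have lT1: "l \<in> T1" unfolding T1_def using pl x0 by auto
  have rT2: "r \<in> T2" unfolding T2_def using pr x0 by auto
  have b1: "bdd_above T1" unfolding T1_def by (rule bdd_aboveI[of _ x0]) auto
  have b2: "bdd_below T2" unfolding T2_def by (rule bdd_belowI[of _ x0]) auto
  define c where "c = Sup T1"
  define d where "d = Inf T2"
  have cT: "c \<in> T1" unfolding c_def by (rule closed_contains_Sup[OF _ b1 cT1]) (use lT1 in auto)
  have dT: "d \<in> T2" unfolding d_def by (rule closed_contains_Inf[OF _ b2 cT2]) (use rT2 in auto)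
  have c: "l \<le> c" "c \<le> x0" "p c \<le> 0" using cT unfolding T1_def by auto
  have d: "x0 \<le> d" "d \<le> r" "p d \<le> 0" using dT unfolding T2_def by auto
  have cx: "c < x0" using c x0 by (cases "c = x0") auto
  have dx: "x0 < d" using d x0 by (cases "d = x0") auto
  have pos: "p x > 0" if "c < x" "x < d" for x
  proof (rule ccontr)
    assume "\<not> p x > 0"
    then have px: "p x \<le> 0" by simp
    show False
    proof (cases "x \<le> x0")
      case True
      then have "x \<in> T1" unfolding T1_def using px that c by auto
      then have "x \<le> c" unfolding c_def by (rule cSup_upper[OF _ b1])
      with that show False by simp
    next
      case False
      then have "x \<in> T2" unfolding T2_def using px that d by auto
      then have "d \<le> x" unfolding d_def by (rule cInf_lower[OF _ b2])
      with that show False by simp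
    qed
  qed
  have pc: "p c = 0"
  proof (rule ccontr)
    assume "p c \<noteq> 0"
    then have neg: "p c < 0" using c by simp
    obtain z where z: "c \<le> z" "z \<le> x0" "p z = 0"
      using IVT'[of p c 0 x0] neg x0 cx continuous_on_subset[OF cp, of "{c..x0}"] c by force
    have "z \<noteq> c" using z neg by auto
    then show False using pos[of z] z cx dx by auto
  qed
  have pd: "p d = 0"
  proof (rule ccontr)
    assume "p d \<noteq> 0"
    then have neg: "p d < 0" using d by simp
    obtain z where z: "x0 \<le> z" "z \<le> d" "p z = 0"
      using IVT2'[of p d 0 x0] neg x0 dx continuous_on_subset[OF cp, of "{x0..d}"] d by force
    have "z \<noteq> d" using z neg by auto
    then show False using pos[of z] z cx dx by auto
  qed
  show ?thesis using c d cx dx pc pd pos by blast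
qed

lemma dir_gt:
  fixes U U' U'' V :: "real \<Rightarrow> real"
  assumes eps: "\<epsilon> > 0" and lr: "l < r"
    and Upos: "\<And>x. U x > 0"
    and dU: "\<And>x. (U has_real_derivative U' x) (at x)"
    and dU': "\<And>x. (U' has_real_derivative U'' x) (at x)"
    and eqU: "\<And>x. - 2 * \<epsilon>\<^sup>2 * U'' x + V x * U x = lam * U x"
    and nu: "\<nu> \<in> dirichlet_eigenvalues \<epsilon> V l r"
  shows "\<nu> > lam"
proof (rule ccontr)
  assume "\<not> \<nu> > lam"
  then have le: "\<nu> \<le> lam" by simp
  obtain u u' u'' where u: "continuous_on {l..r} u" "u l = 0" "u r = 0" "\<exists>x\<in>{l<..<r}. u x \<noteq> 0"
     "\<And>x. x \<in> {l<..<r} \<Longrightarrow> (u has_real_derivative u' x) (at x) \<and> (u' has_real_derivative u'' x) (at x) \<and>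
          - 2 * \<epsilon>\<^sup>2 * u'' x + V x * u x = \<nu> * u x"
    using nu unfolding dirichlet_eigenvalues_def by blast
  obtain x0 where x0: "l < x0" "x0 < r" "u x0 \<noteq> 0" using u(4) by auto
  obtain s :: real where s: "s = 1 \<or> s = -1" "s * u x0 > 0"
  proof (cases "u x0 > 0")
    case True then show ?thesis using that[of 1] by simp
  next
    case False then show ?thesis using that[of "-1"] x0(3) by simp
  qed
  define p where "p = (\<lambda>x. s * u x)"
  have cp: "continuous_on {l..r} p" unfolding p_def using u(1) by (intro continuous_intros)
  obtain c d where cd: "l \<le> c" "c < x0" "x0 < d" "d \<le> r" "p c = 0" "p d = 0" "\<And>x. c < x \<Longrightarrow> x < d \<Longrightarrow> p x > 0"
    using nodal[OF cp, of x0] u(2,3) x0 s unfolding p_def by force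
  show False
  proof (rule sturm_contra[of c d p U "\<lambda>x. s * u' x" "\<lambda>x. s * u'' x" U' U''])
    show "c < d" using cd by simp
    show "continuous_on {c..d} p" by (rule continuous_on_subset[OF cp]) (use cd in auto)
    show "continuous_on {c..d} U" using dU by (intro has_real_derivative_imp_continuous_on) blast
    show "p c = 0" "p d = 0" by (fact cd)+
    show "\<And>x. c < x \<Longrightarrow> x < d \<Longrightarrow> 0 < p x" by (fact cd)
    show "\<And>x. c \<le> x \<Longrightarrow> x \<le> d \<Longrightarrow> 0 < U x" using Upos by blast
    show "(p has_real_derivative s * u' x) (at x)" if "c < x" "x < d" for x
      unfolding p_def using u(5)[of x] that cd by (intro DERIV_cmult) auto
    show "((\<lambda>x. s * u' x) has_real_derivative s * u'' x) (at x)" if "c < x" "x < d" for x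
      using u(5)[of x] that cd by (intro DERIV_cmult) auto
    show "\<And>x. (U has_real_derivative U' x) (at x)" "\<And>x. (U' has_real_derivative U'' x) (at x)"
      by (fact dU dU')+
    fix x assume x: "c < x" "x < d"
    have e1: "2 * \<epsilon>\<^sup>2 * u'' x = (V x - \<nu>) * u x" using u(5)[of x] x cd by (simp add: algebra_simps)
    have e2: "2 * \<epsilon>\<^sup>2 * U'' x = (V x - lam) * U x" using eqU[of x] by (simp add: algebra_simps)
    have "2 * \<epsilon>\<^sup>2 * (s * u'' x * U x - p x * U'' x) = s * U x * (2 * \<epsilon>\<^sup>2 * u'' x) - s * u x * (2 * \<epsilon>\<^sup>2 * U'' x)"
      unfolding p_def by (simp add: algebra_simps)
    also have "\<dots> = s * U x * ((V x - \<nu>) * u x) - s * u x * ((V x - lam) * U x)" by (simp only: e1 e2)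
    also have "\<dots> = (lam - \<nu>) * (p x * U x)" unfolding p_def by (simp add: algebra_simps)
    finally have "2 * \<epsilon>\<^sup>2 * (s * u'' x * U x - p x * U'' x) = (lam - \<nu>) * (p x * U x)" .
    moreover have "(lam - \<nu>) * (p x * U x) \<ge> 0" using le cd(7)[OF x] Upos[of x] by simp
    ultimately have "2 * \<epsilon>\<^sup>2 * (s * u'' x * U x - p x * U'' x) \<ge> 0" by simp
    then show "0 \<le> s * u'' x * U x - p x * U'' x" using eps by (simp add: zero_le_mult_iff)
  qed
qed

lemma cosh_ge_exp_half: "cosh (t::real) \<ge> exp t / 2"
  unfolding cosh_def by (simp add: divide_right_mono)

lemma cosh_decay:
  fixes U U' U'' :: "real \<Rightarrow> real"
  assumes pq: "p < q" and k: "k > 0" and M: "M \<ge> 0"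
    and dU: "\<And>x. (U has_real_derivative U' x) (at x)"
    and dU': "\<And>x. (U' has_real_derivative U'' x) (at x)"
    and ineq: "\<And>x. p \<le> x \<Longrightarrow> x \<le> q \<Longrightarrow> U'' x \<ge> k\<^sup>2 * U x"
    and Up: "U p \<le> M" and Uq: "U q \<le> M"
  shows "U ((p + q) / 2) \<le> 2 * M * exp (- (k * ((q - p) / 2)))"
proof -
  define m where "m = (p + q) / 2"
  define h where "h = (q - p) / 2"
  define B where "B = M / cosh (k * h)"
  have ch: "cosh (k * h) > 0" using cosh_real_ge_1[of "k * h"] by simp
  have B0: "B \<ge> 0" unfolding B_def using M ch by simp
  define g where "g = (\<lambda>x. U x - B * cosh (k * (x - m)))"
  define g' where "g' = (\<lambda>x. U' x - B * (sinh (k * (x - m)) * k))"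
  define g'' where "g'' = (\<lambda>x. U'' x - B * (cosh (k * (x - m)) * k * k))"
  have dg: "(g has_real_derivative g' x) (at x)" for x
    unfolding g_def g'_def using dU[of x] by (auto intro!: derivative_eq_intros)
  have dg': "(g' has_real_derivative g'' x) (at x)" for x
    unfolding g'_def g''_def using dU'[of x] by (auto intro!: derivative_eq_intros)
  have cg: "continuous_on {p..q} g" using dg by (intro has_real_derivative_imp_continuous_on) blast
  have "k * (p - m) = - (k * h)" unfolding m_def h_def by (simp add: field_simps)
  then have ep: "cosh (k * (p - m)) = cosh (k * h)" by simp
  have gp: "g p \<le> 0" unfolding g_def ep B_def using Up ch by simp
  have "k * (q - m) = k * h" unfolding m_def h_def by (simp add: field_simps)
  then have eq: "cosh (k * (q - m)) = cosh (k * h)" by (simp only:)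
  have gq: "g q \<le> 0" unfolding g_def eq B_def using Uq ch by simp
  obtain x0 where x0: "x0 \<in> {p..q}" "\<And>y. y \<in> {p..q} \<Longrightarrow> g y \<le> g x0"
    using continuous_attains_sup[OF compact_Icc _ cg] pq by auto
  have gx0: "g x0 \<le> 0"
  proof (rule ccontr)
    assume "\<not> g x0 \<le> 0"
    then have pos: "g x0 > 0" by simp
    then have x0i: "p < x0" "x0 < q" using x0 gp gq by (auto simp: less_le)
    define dd where "dd = min (x0 - p) (q - x0)"
    have dd: "dd > 0" unfolding dd_def using x0i by simp
    have "g'' x0 \<le> 0"
      by (rule second_deriv_max[where f=g and f'=g' and D="g'' x0" and x=x0 and d=dd, OF dd _ _ dg']) (use x0 dg in \<open>auto simp: dd_def abs_less_iff\<close>)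
    moreover have "g'' x0 \<ge> k\<^sup>2 * g x0"
      using ineq[of x0] x0 unfolding g''_def g_def by (simp add: power2_eq_square algebra_simps)
    moreover have "k\<^sup>2 * g x0 > 0" using k pos by simp
    ultimately show False by simp
  qed
  have "g m \<le> g x0" using x0(2)[of m] pq unfolding m_def by auto
  then have "U m \<le> B" using gx0 unfolding g_def by simp
  also have "B \<le> 2 * M * exp (- (k * h))"
  proof -
    have "B = M / cosh (k * h)" by (simp add: B_def)
    also have "\<dots> \<le> M / (exp (k * h) / 2)"
      using cosh_ge_exp_half[of "k * h"] M by (intro divide_left_mono) auto
    also have "\<dots> = 2 * M * exp (- (k * h))" by (simp add: exp_minus field_simps)
    finally show ?thesis .
  qed
  finally show ?thesis unfolding m_def h_def .
qed

lemma harnack_right: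
  fixes U U' U'' :: "real \<Rightarrow> real"
  assumes w: "w > 0" and K: "K \<le> 2 * w\<^sup>2"
    and Upos: "\<And>x. t0 \<le> x \<Longrightarrow> x \<le> t0 + 1 / w \<Longrightarrow> U x > 0"
    and dU: "\<And>x. (U has_real_derivative U' x) (at x)"
    and dU': "\<And>x. (U' has_real_derivative U'' x) (at x)"
    and ineq: "\<And>x. t0 \<le> x \<Longrightarrow> x \<le> t0 + 1 / w \<Longrightarrow> U'' x \<le> K * U x"
  shows "U' t0 > - 2 * w * U t0"
proof (rule ccontr)
  assume "\<not> U' t0 > - 2 * w * U t0"
  then have hyp: "U' t0 + 2 * w * U t0 \<le> 0" by simp
  define t1 where "t1 = t0 + 1 / w"
  have t01: "t0 < t1" unfolding t1_def using w by simp
  define c0 where "c0 = U t0"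
  have c0: "c0 > 0" unfolding c0_def using Upos[of t0] w by simp
  define \<phi> where "\<phi> = (\<lambda>s. c0 * (1 - w * (s - t0))\<^sup>2)"
  define \<phi>' where "\<phi>' = (\<lambda>s. - 2 * w * c0 * (1 - w * (s - t0)))"
  define \<phi>'' where "\<phi>'' = (\<lambda>s::real. 2 * w\<^sup>2 * c0)"
  have dphi: "(\<phi> has_real_derivative \<phi>' s) (at s)" for s
    unfolding \<phi>_def \<phi>'_def by (auto intro!: derivative_eq_intros simp: power2_eq_square algebra_simps)
  have dphi': "(\<phi>' has_real_derivative \<phi>'' s) (at s)" for s
    unfolding \<phi>'_def \<phi>''_def by (auto intro!: derivative_eq_intros simp: power2_eq_square algebra_simps)
  have phib: "0 \<le> \<phi> s \<and> \<phi> s \<le> c0" if "t0 \<le> s" "s \<le> t1" for s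
  proof -
    have "0 \<le> 1 - w * (s - t0)" "1 - w * (s - t0) \<le> 1"
      using that w unfolding t1_def by (auto simp: field_simps)
    then have "(1 - w * (s - t0))\<^sup>2 \<le> 1" by (simp add: power_le_one)
    then show ?thesis unfolding \<phi>_def using c0 by (simp add: mult_left_le)
  qed
  define W where "W = (\<lambda>s. U' s * \<phi> s - U s * \<phi>' s)"
  have dW: "(W has_real_derivative U'' s * \<phi> s - U s * \<phi>'' s) (at s)" for s
  proof -
    have "(W has_real_derivative (U'' s * \<phi> s + \<phi>' s * U' s) - (U' s * \<phi>' s + \<phi>'' s * U s)) (at s)"
      unfolding W_def by (intro DERIV_diff DERIV_mult dU dU' dphi dphi')
    then show ?thesis by (simp add: algebra_simps)
  qed
  have W0: "W t0 \<le> 0"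
  proof -
    have "W t0 = c0 * (U' t0 + 2 * w * U t0)" unfolding W_def \<phi>_def \<phi>'_def c0_def by (simp add: algebra_simps)
    then show ?thesis using c0 hyp by (simp add: mult_nonneg_nonpos)
  qed
  have Wle: "W s \<le> 0" if s: "t0 \<le> s" "s \<le> t1" for s
  proof -
    have "W s \<le> W t0"
    proof (rule DERIV_nonpos_imp_nonincreasing[OF s(1)])
      fix x assume x: "t0 \<le> x" "x \<le> s"
      then have xt: "t0 \<le> x" "x \<le> t0 + 1 / w" using s unfolding t1_def by auto
      have "U'' x * \<phi> x \<le> K * U x * \<phi> x"
        using ineq[OF xt] phib[of x] x s by (intro mult_right_mono) auto
      also have "\<dots> = U x * (K * \<phi> x)" by simp
      also have "\<dots> \<le> U x * \<phi>'' x"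
      proof (rule mult_left_mono)
        show "0 \<le> U x" using Upos[OF xt] by simp
        have pb: "0 \<le> \<phi> x" "\<phi> x \<le> c0" using phib[of x] x s by auto
        show "K * \<phi> x \<le> \<phi>'' x"
        proof (cases "K \<ge> 0")
          case True
          then have "K * \<phi> x \<le> K * c0" using pb by (intro mult_left_mono) auto
          also have "\<dots> \<le> 2 * w\<^sup>2 * c0" using K c0 by (intro mult_right_mono) auto
          finally show ?thesis unfolding \<phi>''_def .
        next
          case False
          then have "K * \<phi> x \<le> 0" using pb by (simp add: mult_nonpos_nonneg)
          also have "0 \<le> \<phi>'' x" unfolding \<phi>''_def using c0 by simp
          finally show ?thesis .
        qed
      qed
      finally show "\<exists>y. DERIV W x :> y \<and> y \<le> 0" using dW[of x] by (intro exI[of _ "U'' x * \<phi> x - U x * \<phi>'' x"]) auto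
    qed
    then show ?thesis using W0 by simp
  qed
  define h where "h = (\<lambda>s. \<phi> s / U s)"
  have "h t0 \<le> h t1"
  proof (rule DERIV_nonneg_imp_nondecreasing[OF less_imp_le[OF t01]])
    fix x assume x: "t0 \<le> x" "x \<le> t1"
    have Ux: "U x > 0" using Upos[of x] x unfolding t1_def by auto
    have "(h has_real_derivative (\<phi>' x * U x - \<phi> x * U' x) / (U x * U x)) (at x)"
      unfolding h_def using Ux by (intro DERIV_divide dphi dU) auto
    moreover have "(\<phi>' x * U x - \<phi> x * U' x) / (U x * U x) = - W x / (U x * U x)"
      unfolding W_def by (simp add: algebra_simps)
    moreover have "- W x / (U x * U x) \<ge> 0" using Wle[OF x] Ux by (intro divide_nonneg_pos) auto
    ultimately show "\<exists>y. DERIV h x :> y \<and> y \<ge> 0" by metis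
  qed
  moreover have "h t0 = 1" unfolding h_def \<phi>_def c0_def using c0 c0_def by simp
  moreover have "h t1 = 0" unfolding h_def \<phi>_def t1_def using w by simp
  ultimately show False by simp
qed

lemma harnack_left:
  fixes U U' U'' :: "real \<Rightarrow> real"
  assumes w: "w > 0" and K: "K \<le> 2 * w\<^sup>2"
    and Upos: "\<And>x. t0 - 1 / w \<le> x \<Longrightarrow> x \<le> t0 \<Longrightarrow> U x > 0"
    and dU: "\<And>x. (U has_real_derivative U' x) (at x)"
    and dU': "\<And>x. (U' has_real_derivative U'' x) (at x)"
    and ineq: "\<And>x. t0 - 1 / w \<le> x \<Longrightarrow> x \<le> t0 \<Longrightarrow> U'' x \<le> K * U x"
  shows "U' t0 < 2 * w * U t0"
proof (rule ccontr)
  assume "\<not> U' t0 < 2 * w * U t0"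
  then have hyp: "U' t0 - 2 * w * U t0 \<ge> 0" by simp
  define t1 where "t1 = t0 - 1 / w"
  have t01: "t1 < t0" unfolding t1_def using w by simp
  define c0 where "c0 = U t0"
  have c0: "c0 > 0" unfolding c0_def using Upos[of t0] w by simp
  define \<phi> where "\<phi> = (\<lambda>s. c0 * (1 - w * (t0 - s))\<^sup>2)"
  define \<phi>' where "\<phi>' = (\<lambda>s. 2 * w * c0 * (1 - w * (t0 - s)))"
  define \<phi>'' where "\<phi>'' = (\<lambda>s::real. 2 * w\<^sup>2 * c0)"
  have dphi: "(\<phi> has_real_derivative \<phi>' s) (at s)" for s
    unfolding \<phi>_def \<phi>'_def by (auto intro!: derivative_eq_intros simp: power2_eq_square algebra_simps)
  have dphi': "(\<phi>' has_real_derivative \<phi>'' s) (at s)" for s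
    unfolding \<phi>'_def \<phi>''_def by (auto intro!: derivative_eq_intros simp: power2_eq_square algebra_simps)
  have phib: "0 \<le> \<phi> s \<and> \<phi> s \<le> c0" if "t1 \<le> s" "s \<le> t0" for s
  proof -
    have "0 \<le> 1 - w * (t0 - s)" "1 - w * (t0 - s) \<le> 1"
      using that w unfolding t1_def by (auto simp: field_simps)
    then have "(1 - w * (t0 - s))\<^sup>2 \<le> 1" by (simp add: power_le_one)
    then show ?thesis unfolding \<phi>_def using c0 by (simp add: mult_left_le)
  qed
  define W where "W = (\<lambda>s. U' s * \<phi> s - U s * \<phi>' s)"
  have dW: "(W has_real_derivative U'' s * \<phi> s - U s * \<phi>'' s) (at s)" for s
  proof -
    have "(W has_real_derivative (U'' s * \<phi> s + \<phi>' s * U' s) - (U' s * \<phi>' s + \<phi>'' s * U s)) (at s)"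
      unfolding W_def by (intro DERIV_diff DERIV_mult dU dU' dphi dphi')
    then show ?thesis by (simp add: algebra_simps)
  qed
  have W0: "W t0 \<ge> 0"
  proof -
    have "W t0 = c0 * (U' t0 - 2 * w * U t0)" unfolding W_def \<phi>_def \<phi>'_def c0_def by (simp add: algebra_simps)
    then show ?thesis using c0 hyp by simp
  qed
  have Wge: "W s \<ge> 0" if s: "t1 \<le> s" "s \<le> t0" for s
  proof -
    have "W t0 \<le> W s"
    proof (rule DERIV_nonpos_imp_nonincreasing[OF s(2)])
      fix x assume x: "s \<le> x" "x \<le> t0"
      then have xt: "t0 - 1 / w \<le> x" "x \<le> t0" using s unfolding t1_def by auto
      have "U'' x * \<phi> x \<le> K * U x * \<phi> x"
        using ineq[OF xt] phib[of x] x s by (intro mult_right_mono) auto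
      also have "\<dots> = U x * (K * \<phi> x)" by simp
      also have "\<dots> \<le> U x * \<phi>'' x"
      proof (rule mult_left_mono)
        show "0 \<le> U x" using Upos[OF xt] by simp
        have pb: "0 \<le> \<phi> x" "\<phi> x \<le> c0" using phib[of x] x s by auto
        show "K * \<phi> x \<le> \<phi>'' x"
        proof (cases "K \<ge> 0")
          case True
          then have "K * \<phi> x \<le> K * c0" using pb by (intro mult_left_mono) auto
          also have "\<dots> \<le> 2 * w\<^sup>2 * c0" using K c0 by (intro mult_right_mono) auto
          finally show ?thesis unfolding \<phi>''_def .
        next
          case False
          then have "K * \<phi> x \<le> 0" using pb by (simp add: mult_nonpos_nonneg)
          also have "0 \<le> \<phi>'' x" unfolding \<phi>''_def using c0 by simp
          finally show ?thesis .
        qed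
      qed
      finally show "\<exists>y. DERIV W x :> y \<and> y \<le> 0" using dW[of x] by (intro exI[of _ "U'' x * \<phi> x - U x * \<phi>'' x"]) auto
    qed
    then show ?thesis using W0 by simp
  qed
  define h where "h = (\<lambda>s. \<phi> s / U s)"
  have "h t0 \<le> h t1"
  proof (rule DERIV_nonpos_imp_nonincreasing[OF less_imp_le[OF t01]])
    fix x assume x: "t1 \<le> x" "x \<le> t0"
    have Ux: "U x > 0" using Upos[of x] x unfolding t1_def by auto
    have "(h has_real_derivative (\<phi>' x * U x - \<phi> x * U' x) / (U x * U x)) (at x)"
      unfolding h_def using Ux by (intro DERIV_divide dphi dU) auto
    moreover have "(\<phi>' x * U x - \<phi> x * U' x) / (U x * U x) = - W x / (U x * U x)"
      unfolding W_def by (simp add: algebra_simps)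
    moreover have "- W x / (U x * U x) \<le> 0" using Wge[OF x] Ux by (intro divide_nonpos_pos) auto
    ultimately show "\<exists>y. DERIV h x :> y \<and> y \<le> 0" by metis
  qed
  moreover have "h t0 = 1" unfolding h_def \<phi>_def c0_def using c0 c0_def by simp
  moreover have "h t1 = 0" unfolding h_def \<phi>_def t1_def using w by simp
  ultimately show False by simp
qed

lemma harnack_ratio:
  fixes U U' U'' :: "real \<Rightarrow> real"
  assumes w: "w > 0" and K: "K \<le> 2 * w\<^sup>2"
    and Upos: "\<And>x. \<alpha> - 1 / w \<le> x \<Longrightarrow> x \<le> \<beta> + 1 / w \<Longrightarrow> U x > 0"
    and dU: "\<And>x. (U has_real_derivative U' x) (at x)"
    and dU': "\<And>x. (U' has_real_derivative U'' x) (at x)"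
    and ineq: "\<And>x. \<alpha> - 1 / w \<le> x \<Longrightarrow> x \<le> \<beta> + 1 / w \<Longrightarrow> U'' x \<le> K * U x"
    and x: "\<alpha> \<le> x" "x \<le> \<beta>" and y: "\<alpha> \<le> y" "y \<le> \<beta>"
  shows "U x \<ge> exp (- (2 * w * \<bar>x - y\<bar>)) * U y"
proof -
  have iw: "0 < 1 / w" using w by simp
  have bnd: "\<bar>U' t / U t\<bar> \<le> 2 * w" if t: "\<alpha> \<le> t" "t \<le> \<beta>" for t
  proof -
    have Ut: "U t > 0" using t iw by (intro Upos) linarith+
    have "U' t > - 2 * w * U t"
      by (rule harnack_right[OF w K _ dU dU']) (use t in \<open>auto intro!: Upos ineq\<close>)
    moreover have "U' t < 2 * w * U t"
      by (rule harnack_left[OF w K _ dU dU']) (use t in \<open>auto intro!: Upos ineq\<close>)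
    ultimately show ?thesis using Ut by (auto simp: abs_le_iff field_simps)
  qed
  have lnb: "\<bar>ln (U b) - ln (U a)\<bar> \<le> 2 * w * (b - a)" if ab: "\<alpha> \<le> a" "a \<le> b" "b \<le> \<beta>" for a b
  proof (cases "a = b")
    case True then show ?thesis by simp
  next
    case False
    then have ab': "a < b" using ab by simp
    have dl: "((\<lambda>t. ln (U t)) has_real_derivative U' t / U t) (at t)" if "\<alpha> \<le> t" "t \<le> \<beta>" for t
    proof -
      have "U t > 0" using that iw by (intro Upos) linarith+
      then show ?thesis using dU[of t] by (auto intro!: derivative_eq_intros simp: field_simps)
    qed
    have "\<exists>z. a < z \<and> z < b \<and> ln (U b) - ln (U a) = (b - a) * (U' z / U z)"
    proof (rule mvt_open[OF ab'])
      show "continuous_on {a..b} (\<lambda>t. ln (U t))"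
        by (rule has_real_derivative_imp_continuous_on[where f'="\<lambda>t. U' t / U t"]) (use dl ab in auto)
      show "\<And>t. a < t \<Longrightarrow> t < b \<Longrightarrow> ((\<lambda>t. ln (U t)) has_real_derivative U' t / U t) (at t)"
        using dl ab by auto
    qed
    then obtain z where z: "a < z" "z < b" "ln (U b) - ln (U a) = (b - a) * (U' z / U z)" by blast
    have "\<bar>(b - a) * (U' z / U z)\<bar> \<le> (b - a) * (2 * w)" unfolding abs_mult
      using bnd[of z] z ab by (intro mult_mono) auto
    then show ?thesis using z(3) by (simp add: mult_ac)
  qed
  have Upx: "U x > 0" "U y > 0" using x y iw by (intro Upos; linarith)+
  have "ln (U y) - ln (U x) \<le> 2 * w * \<bar>x - y\<bar>"
  proof (cases "x \<le> y")
    case True then show ?thesis using lnb[of x y] x y by auto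
  next
    case False then show ?thesis using lnb[of y x] x y by auto
  qed
  then have "ln (U y) - 2 * w * \<bar>x - y\<bar> \<le> ln (U x)" by simp
  then have "exp (ln (U y) - 2 * w * \<bar>x - y\<bar>) \<le> U x" using Upx by (metis exp_le_cancel_iff exp_ln)
  then show ?thesis using Upx by (simp add: exp_diff exp_minus field_simps)
qed

lemma periodic_int:
  assumes "periodic1 f"
  shows "f (x + real_of_int k) = f x"
proof -
  have nat: "f (y + real n) = f y" for y n
  proof (induction n)
    case (Suc n)
    have "y + real (Suc n) = (y + real n) + 1" by simp
    then have "f (y + real (Suc n)) = f ((y + real n) + 1)" by (simp only:)
    also have "\<dots> = f (y + real n)" using assms unfolding periodic1_def by blast
    finally show ?case using Suc by simp
  qed simp
  show ?thesis
  proof (cases "k \<ge> 0")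
    case True
    then obtain n where "k = int n" by (metis nonneg_eq_int)
    then show ?thesis using nat by simp
  next
    case False
    then have "- k \<ge> 0" by simp
    then obtain n where kn: "- k = int n" by (metis nonneg_eq_int)
    have e: "x + real_of_int k + real n = x" using kn by (simp add: algebra_simps of_int_minus[symmetric])
    have "f (x + real_of_int k) = f ((x + real_of_int k) + real n)" using nat by simp
    also have "\<dots> = f x" by (simp only: e)
    finally show ?thesis .
  qed
qed

lemma periodic_max:
  fixes f :: "real \<Rightarrow> real"
  assumes "periodic1 f" "continuous_on UNIV f"
  shows "\<exists>xm\<in>{-1/4..3/4}. \<forall>y. f y \<le> f xm"
proof -
  obtain xm where xm: "xm \<in> {-1/4..3/4::real}" "\<And>y. y \<in> {-1/4..3/4} \<Longrightarrow> f y \<le> f xm"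
    using continuous_attains_sup[OF compact_Icc _ continuous_on_subset[OF assms(2)], of "-1/4" "3/4"] by auto
  have "f y \<le> f xm" for y
  proof -
    define k where "k = \<lfloor>y + 1/4\<rfloor>"
    define y' where "y' = y - real_of_int k"
    have k1: "real_of_int k \<le> y + 1/4" unfolding k_def by (rule of_int_floor_le)
    have k2: "y + 1/4 < real_of_int k + 1" unfolding k_def by (rule real_of_int_floor_add_one_gt)
    have "y' \<in> {-1/4..3/4}" unfolding y'_def using k1 k2 by auto
    moreover have "f y = f y'" using periodic_int[OF assms(1), of y' k] unfolding y'_def by simp
    ultimately show ?thesis using xm by auto
  qed
  then show ?thesis using xm by blast
qed

lemma exp_ge_sq4: "(y::real) \<ge> 0 \<Longrightarrow> exp y \<ge> y\<^sup>2 / 4"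
proof -
  assume y: "y \<ge> 0"
  have "(1 + y / real 2) ^ 2 \<le> exp y" by (rule exp_ge_one_plus_x_over_n_power_n) (use y in auto)
  moreover have "y\<^sup>2 / 4 \<le> (1 + y / 2) ^ 2" using y by (simp add: power2_eq_square field_simps)
  ultimately show ?thesis by simp
qed

locale wellsetup =
  fixes \<rho> A :: real and V :: "real \<Rightarrow> real"
  assumes rho: "0 < \<rho>" "\<rho> < 1/20"
    and A2: "2 * \<bar>A\<bar> * \<rho>\<^sup>2 \<le> 1/4"
    and Vper: "periodic1 V" and Vc: "continuous_on UNIV V"
    and V0: "\<And>x. \<bar>x\<bar> < \<rho> \<Longrightarrow> V x = x\<^sup>2 / 2 + A * x ^ 4 * omega \<bar>x\<bar>"
    and Va: "\<And>x. \<bar>x - 1/2\<bar> < \<rho> \<Longrightarrow> V x = (x - 1/2)\<^sup>2 / 2 - A * (x - 1/2) ^ 4 * omega \<bar>x - 1/2\<bar>"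
    and Vpos: "\<And>x. x \<notin> \<int> \<Longrightarrow> x - 1/2 \<notin> \<int> \<Longrightarrow> V x > 0"
begin

lemma pert_bound:
  assumes "\<bar>y\<bar> < \<rho>"
  shows "\<bar>A * y ^ 4 * omega \<bar>y\<bar>\<bar> \<le> y\<^sup>2 / 8"
proof -
  have om: "\<bar>omega \<bar>y\<bar>\<bar> \<le> 1" unfolding omega_def by simp
  have "y\<^sup>2 \<le> \<rho>\<^sup>2" using assms by (simp add: abs_le_square_iff[symmetric] less_imp_le)
  then have "\<bar>A\<bar> * y\<^sup>2 \<le> \<bar>A\<bar> * \<rho>\<^sup>2" by (simp add: mult_left_mono)
  also have "\<dots> \<le> 1/8" using A2 by simp
  finally have a8: "\<bar>A\<bar> * y\<^sup>2 \<le> 1/8" .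
  have "\<bar>A * y ^ 4 * omega \<bar>y\<bar>\<bar> = \<bar>A\<bar> * y\<^sup>2 * y\<^sup>2 * \<bar>omega \<bar>y\<bar>\<bar>"
    by (simp add: abs_mult power2_eq_square power4_eq_xxxx)
  also have "\<dots> \<le> \<bar>A\<bar> * y\<^sup>2 * y\<^sup>2 * 1" using om by (intro mult_left_mono) auto
  also have "\<dots> \<le> 1/8 * y\<^sup>2" using mult_right_mono[OF a8, of "y\<^sup>2"] by simp
  finally show ?thesis by simp
qed

lemma Vwell:
  assumes b: "b = 0 \<or> b = 1/2" and y: "\<bar>y\<bar> < \<rho>"
  shows "3 * y\<^sup>2 / 8 \<le> V (b + y) \<and> V (b + y) \<le> 5 * y\<^sup>2 / 8"
proof -
  have pb: "\<bar>A * y ^ 4 * omega \<bar>y\<bar>\<bar> \<le> y\<^sup>2 / 8" by (rule pert_bound[OF y])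
  from b show ?thesis
  proof
    assume "b = 0"
    then have "V (b + y) = y\<^sup>2 / 2 + A * y ^ 4 * omega \<bar>y\<bar>" using V0[OF y] by simp
    then show ?thesis using pb by (auto simp: abs_le_iff)
  next
    assume b2: "b = 1/2"
    have "\<bar>(b + y) - 1/2\<bar> < \<rho>" using y b2 by simp
    then have "V (b + y) = y\<^sup>2 / 2 - A * y ^ 4 * omega \<bar>y\<bar>" unfolding b2 using Va[of "1/2 + y"] by simp
    then show ?thesis using pb by (auto simp: abs_le_iff)
  qed
qed

lemma Vnonneg:
  fixes x :: real
  shows "V x \<ge> 0"
proof (cases "x \<in> \<int> \<or> x - 1/2 \<in> \<int>")
  case False then show ?thesis using Vpos[of x] by auto
next
  case True
  then obtain k :: int and b :: real where kb: "b = 0 \<or> b = 1/2" "x = b + real_of_int k"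
    by (metis Ints_cases add.commute add_0 diff_add_cancel)
  have "V x = V b" using periodic_int[OF Vper, of b k] kb by simp
  also have "V b \<ge> 0" using Vwell[OF kb(1), of 0] rho by simp
  finally show ?thesis by simp
qed

definition "Bset = {-1/4..-\<rho>/2} \<union> {\<rho>/2..1/2-\<rho>/2} \<union> {1/2+\<rho>/2..3/4::real}"

lemma Bset_compact: "compact Bset" unfolding Bset_def by (intro compact_Un compact_Icc)

lemma not_Int_small:
  fixes x :: real
  assumes "x \<in> \<int>" "-1 < x" "x < 1"
  shows "x = 0"
proof -
  obtain k where k: "x = real_of_int k" using assms(1) Ints_cases by blast
  then have "-1 < k" "k < 1" using assms by simp_all
  then have "k = 0" by simp
  then show ?thesis using k by simp
qed

lemma Bset_pos: "x \<in> Bset \<Longrightarrow> V x > 0"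
proof -
  assume x: "x \<in> Bset"
  have x1: "x \<noteq> 0" "x - 1/2 \<noteq> 0" "-1 < x" "x < 1" "-1 < x - 1/2" "x - 1/2 < 1"
    using x rho unfolding Bset_def by auto
  have "x \<notin> \<int>" using not_Int_small[of x] x1 by auto
  moreover have "x - 1/2 \<notin> \<int>" using not_Int_small[of "x - 1/2"] x1 by auto
  ultimately show ?thesis by (rule Vpos)
qed

definition "\<delta>0 = Inf (V ` Bset)"

lemma delta0: "\<delta>0 > 0" "\<And>x. x \<in> Bset \<Longrightarrow> V x \<ge> \<delta>0"
proof -
  have ne: "Bset \<noteq> {}" unfolding Bset_def using rho by auto
  obtain xm where xm: "xm \<in> Bset" "\<And>y. y \<in> Bset \<Longrightarrow> V xm \<le> V y"
    using continuous_attains_inf[OF Bset_compact ne continuous_on_subset[OF Vc]] by auto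
  have bb: "bdd_below (V ` Bset)" using xm(2) by (auto intro!: bdd_belowI[of _ "V xm"])
  have "\<delta>0 = V xm" unfolding \<delta>0_def
    by (rule antisym) (auto intro!: cInf_lower cInf_greatest simp: xm bb ne)
  then show "\<delta>0 > 0" using Bset_pos[OF xm(1)] by simp
  show "\<And>x. x \<in> Bset \<Longrightarrow> V x \<ge> \<delta>0" using xm \<open>\<delta>0 = V xm\<close> by simp
qed

lemma in_Bset:
  assumes "b = 0 \<or> b = 1/2" "\<rho>/2 \<le> \<bar>x - b\<bar>" "\<bar>x - b\<bar> \<le> 3 * \<rho> / 2"
  shows "x \<in> Bset"
  using assms rho unfolding Bset_def by (auto simp: abs_if split: if_splits)

lemma outside_Bset:
  assumes "x \<in> {-1/4..3/4}" "x \<notin> Bset"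
  shows "\<bar>x\<bar> < \<rho>/2 \<or> \<bar>x - 1/2\<bar> < \<rho>/2"
  using assms rho unfolding Bset_def by (auto simp: abs_if split: if_splits)

end

locale epsU = wellsetup +
  fixes \<epsilon> lam :: real and U U' U'' :: "real \<Rightarrow> real"
  assumes eps: "\<epsilon> > 0" and Upos: "\<And>x. U x > 0" and Uper: "periodic1 U"
    and dU: "\<And>x. (U has_real_derivative U' x) (at x)"
    and dU': "\<And>x. (U' has_real_derivative U'' x) (at x)"
    and eqU: "\<And>x. - 2 * \<epsilon>\<^sup>2 * U'' x + V x * U x = lam * U x"
    and small1: "12 * sqrt \<epsilon> < \<rho>" and small2: "12 * \<epsilon> \<le> \<delta>0"
begin

abbreviation "s \<equiv> sqrt \<epsilon>"

lemma s_pos: "s > 0" and s_sq: "s\<^sup>2 = \<epsilon>" "s * s = \<epsilon>"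
  using eps by (auto simp: power2_eq_square[symmetric])

lemma Upp: "2 * \<epsilon>\<^sup>2 * U'' x = (V x - lam) * U x"
  using eqU[of x] by (simp add: algebra_simps)

lemma Upp': "U'' x = (V x - lam) / (2 * \<epsilon>\<^sup>2) * U x"
  using Upp[of x] eps by (simp add: field_simps)

lemma cU: "continuous_on S U"
  using dU by (intro has_real_derivative_imp_continuous_on) blast

definition "xs = (SOME xm. xm \<in> {-1/4..3/4} \<and> (\<forall>y. U y \<le> U xm))"

lemma xs: "xs \<in> {-1/4..3/4}" "\<And>y. U y \<le> U xs"
proof -
  have "\<exists>xm\<in>{-1/4..3/4}. \<forall>y. U y \<le> U xm" by (rule periodic_max[OF Uper cU])
  then have "xs \<in> {-1/4..3/4} \<and> (\<forall>y. U y \<le> U xs)" unfolding xs_def by (rule someI2_bex) auto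
  then show "xs \<in> {-1/4..3/4}" "\<And>y. U y \<le> U xs" by auto
qed

abbreviation "M \<equiv> U xs"

lemma M_pos: "M > 0" using Upos by simp

lemma V_xs: "V xs \<le> lam"
proof -
  have "U'' xs \<le> 0"
    by (rule second_deriv_max[where f=U and f'=U' and D="U'' xs" and x=xs and d=1]) (use xs dU dU' in auto)
  then have "2 * \<epsilon>\<^sup>2 * U'' xs \<le> 0" by (simp add: mult_nonneg_nonpos)
  then have "(V xs - lam) * U xs \<le> 0" using Upp[of xs] by simp
  then show ?thesis using Upos[of xs] by (simp add: mult_le_0_iff)
qed

lemma lam_nonneg: "lam \<ge> 0" using V_xs Vnonneg[of xs] by simp

definition "cf b x = cos (pi * (x - b) / (4 * s))"
definition "cf' b x = - sin (pi * (x - b) / (4 * s)) * (pi / (4 * s))"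
definition "cf'' b x = - cos (pi * (x - b) / (4 * s)) * (pi / (4 * s)) * (pi / (4 * s))"

lemma d_cf: "(cf b has_real_derivative cf' b x) (at x)"
  unfolding cf_def cf'_def using eps by (auto intro!: derivative_eq_intros simp: field_simps)

lemma d_cf': "(cf' b has_real_derivative cf'' b x) (at x)"
  unfolding cf'_def cf''_def using eps by (auto intro!: derivative_eq_intros simp: field_simps)

lemma cf_ends: "cf b (b - 2 * s) = 0" "cf b (b + 2 * s) = 0"
proof -
  have e1: "pi * (b - 2 * s - b) / (4 * s) = - (pi / 2)" and e2: "pi * (b + 2 * s - b) / (4 * s) = pi / 2"
    using s_pos by (simp_all add: field_simps)
  show "cf b (b - 2 * s) = 0" unfolding cf_def e1 by simp
  show "cf b (b + 2 * s) = 0" unfolding cf_def e2 by simp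
qed

lemma cf_pos: "b - 2 * s < x \<Longrightarrow> x < b + 2 * s \<Longrightarrow> cf b x > 0"
proof -
  assume x: "b - 2 * s < x" "x < b + 2 * s"
  have h: "-(1/2) < (x - b) / (4 * s)" "(x - b) / (4 * s) < 1/2" using x s_pos by (simp_all add: field_simps)
  have "pi * (-(1/2)) < pi * ((x - b) / (4 * s))" "pi * ((x - b) / (4 * s)) < pi * (1/2)"
    using h pi_gt_zero by (intro mult_strict_left_mono; simp)+
  then have "- (pi / 2) < pi * (x - b) / (4 * s)" "pi * (x - b) / (4 * s) < pi / 2" by simp_all
  then show ?thesis unfolding cf_def by (rule cos_gt_zero_pi)
qed

lemma cf''_eq: "2 * \<epsilon>\<^sup>2 * cf'' b x = - (pi\<^sup>2 * \<epsilon> / 8) * cf b x"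
proof -
  have "2 * \<epsilon>\<^sup>2 * cf'' b x = - (2 * \<epsilon>\<^sup>2 * pi\<^sup>2 / (16 * (s * s))) * cf b x"
    unfolding cf''_def cf_def by (simp add: power2_eq_square field_simps)
  also have "\<dots> = - (pi\<^sup>2 * \<epsilon> / 8) * cf b x" unfolding s_sq using eps by (simp add: power2_eq_square field_simps)
  finally show ?thesis .
qed

lemma pi_sq: "pi\<^sup>2 * \<epsilon> / 8 \<le> 2 * \<epsilon>"
proof -
  have "pi\<^sup>2 \<le> 4\<^sup>2" using pi_less_4 pi_gt_zero by (intro power_mono) auto
  then show ?thesis using eps by (simp add: field_simps)
qed

lemma V_core_cf:
  assumes b: "b = 0 \<or> b = 1/2" and x: "b - 2 * s < x" "x < b + 2 * s"
  shows "V x \<le> 5 * \<epsilon> / 2"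
proof -
  have ax: "\<bar>x - b\<bar> < 2 * s" using x by auto
  then have "\<bar>x - b\<bar> < \<rho>" using small1 s_pos by linarith
  then have "V (b + (x - b)) \<le> 5 * (x - b)\<^sup>2 / 8" using Vwell[OF b] by blast
  moreover have "(x - b)\<^sup>2 \<le> (2 * s)\<^sup>2"
  proof -
    have "\<bar>x - b\<bar> \<le> \<bar>2 * s\<bar>" using ax s_pos by simp
    then show ?thesis by (simp only: abs_le_square_iff)
  qed
  moreover have "(2 * s)\<^sup>2 = 4 * \<epsilon>" using s_sq by (simp add: power_mult_distrib)
  ultimately show ?thesis by simp
qed

lemma lam_lt: "lam < 6 * \<epsilon>"
proof (rule ccontr)
  assume "\<not> lam < 6 * \<epsilon>"
  then have lam6: "lam \<ge> 6 * \<epsilon>" by simp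
  show False
  proof (rule sturm_contra[of "0 - 2 * s" "0 + 2 * s" "cf 0" U "cf' 0" "cf'' 0" U' U''])
    show "0 - 2 * s < 0 + 2 * s" using s_pos by simp
    show "continuous_on {0 - 2 * s..0 + 2 * s} (cf 0)" using d_cf by (intro has_real_derivative_imp_continuous_on) blast
    show "continuous_on {0 - 2 * s..0 + 2 * s} U" by (rule cU)
    show "cf 0 (0 - 2 * s) = 0" "cf 0 (0 + 2 * s) = 0" using cf_ends[of 0] by simp_all
    show "\<And>x. 0 - 2 * s < x \<Longrightarrow> x < 0 + 2 * s \<Longrightarrow> 0 < cf 0 x" by (rule cf_pos)
    show "\<And>x. 0 - 2 * s \<le> x \<Longrightarrow> x \<le> 0 + 2 * s \<Longrightarrow> 0 < U x" by (rule Upos)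
    show "\<And>x. (cf 0 has_real_derivative cf' 0 x) (at x)" by (rule d_cf)
    show "\<And>x. (cf' 0 has_real_derivative cf'' 0 x) (at x)" by (rule d_cf')
    show "\<And>x. (U has_real_derivative U' x) (at x)" by (rule dU)
    show "\<And>x. (U' has_real_derivative U'' x) (at x)" by (rule dU')
    fix x assume x: "0 - 2 * s < x" "x < 0 + 2 * s"
    have Vx: "V x \<le> 5 * \<epsilon> / 2" using V_core_cf[of 0 x] x by simp
    have cp: "cf 0 x > 0" using cf_pos[OF x] .
    have "2 * \<epsilon>\<^sup>2 * (cf'' 0 x * U x - cf 0 x * U'' x) = cf 0 x * U x * (lam - V x - pi\<^sup>2 * \<epsilon> / 8)"
    proof -
      have "2 * \<epsilon>\<^sup>2 * (cf'' 0 x * U x - cf 0 x * U'' x) = (2 * \<epsilon>\<^sup>2 * cf'' 0 x) * U x - cf 0 x * (2 * \<epsilon>\<^sup>2 * U'' x)"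
        by (simp add: algebra_simps)
      also have "\<dots> = (- (pi\<^sup>2 * \<epsilon> / 8) * cf 0 x) * U x - cf 0 x * ((V x - lam) * U x)"
        by (simp only: cf''_eq Upp)
      also have "\<dots> = cf 0 x * U x * (lam - V x - pi\<^sup>2 * \<epsilon> / 8)" by (simp add: algebra_simps)
      finally show ?thesis .
    qed
    moreover have "lam - V x - pi\<^sup>2 * \<epsilon> / 8 \<ge> 0" using lam6 Vx pi_sq eps by linarith
    ultimately have "2 * \<epsilon>\<^sup>2 * (cf'' 0 x * U x - cf 0 x * U'' x) \<ge> 0" using cp Upos[of x] by simp
    then show "0 \<le> cf'' 0 x * U x - cf 0 x * U'' x" using eps by (simp add: zero_le_mult_iff)
  qed
qed

lemma s_lt: "2 * s < \<rho>" "6 * s < \<rho> / 2" using small1 s_pos by linarith+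

lemma sq_to_abs: "a\<^sup>2 \<le> c\<^sup>2 * \<epsilon> \<Longrightarrow> c \<ge> 0 \<Longrightarrow> \<bar>a\<bar> \<le> c * s"
proof -
  assume h: "a\<^sup>2 \<le> c\<^sup>2 * \<epsilon>" "c \<ge> 0"
  have "sqrt (a\<^sup>2) \<le> sqrt (c\<^sup>2 * \<epsilon>)" using h(1) by (rule real_sqrt_le_mono)
  then show ?thesis using h(2) by (simp add: real_sqrt_mult)
qed

lemma abs_to_sq: "\<bar>a\<bar> \<le> c * s \<Longrightarrow> a\<^sup>2 \<le> c\<^sup>2 * \<epsilon>"
proof -
  assume h: "\<bar>a\<bar> \<le> c * s"
  have "\<bar>a\<bar>\<^sup>2 \<le> (c * s)\<^sup>2" using h by (intro power_mono) auto
  then show ?thesis using s_sq by (simp add: power_mult_distrib)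
qed

lemma dir_all_gt:
  assumes "l < r" "\<nu> \<in> dirichlet_eigenvalues \<epsilon> V l r"
  shows "\<nu> > lam"
  by (rule dir_gt[OF eps assms(1) Upos dU dU' eqU assms(2)])

lemma dir_bdd: "l < r \<Longrightarrow> bdd_below (dirichlet_eigenvalues \<epsilon> V l r)"
  using dir_all_gt by (auto intro!: bdd_belowI[of _ lam] less_imp_le)

lemma E_lower:
  assumes b: "b = 0 \<or> b = 1/2"
  shows "first_dirichlet_eigenvalue \<epsilon> V (b - \<rho>) (b + \<rho>) \<ge> lam"
proof -
  interpret sh: shoot \<epsilon> V "b - \<rho>" "b + \<rho>" using eps Vc rho by unfold_locales auto
  have "\<exists>\<nu>\<le>6 * \<epsilon>. \<nu> \<in> dirichlet_eigenvalues \<epsilon> V (b - \<rho>) (b + \<rho>)"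
  proof (rule sh.shooting[of "-1" "b - 2 * s" "b + 2 * s" "cf b" "cf' b" "cf'' b"])
    show "\<And>t. -1 \<le> V t" using Vnonneg by (metis le_minus_one_simps(1) order_trans)
    show "b - \<rho> < b - 2 * s" "b - 2 * s < b + 2 * s" "b + 2 * s \<le> b + \<rho>" using s_lt(1) s_pos by linarith+
    show "continuous_on {b - 2 * s..b + 2 * s} (cf b)" using d_cf by (intro has_real_derivative_imp_continuous_on) blast
    show "cf b (b - 2 * s) = 0" "cf b (b + 2 * s) = 0" by (rule cf_ends)+
    show "\<And>x. b - 2 * s < x \<Longrightarrow> x < b + 2 * s \<Longrightarrow> 0 < cf b x" by (rule cf_pos)
    show "\<And>x. (cf b has_real_derivative cf' b x) (at x)" by (rule d_cf)
    show "\<And>x. (cf' b has_real_derivative cf'' b x) (at x)" by (rule d_cf')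
    fix x assume x: "b - 2 * s < x" "x < b + 2 * s"
    have Vx: "V x \<le> 5 * \<epsilon> / 2" using V_core_cf[OF b x] .
    have cp: "cf b x > 0" using cf_pos[OF x] .
    have "V x - 6 * \<epsilon> \<le> - (pi\<^sup>2 * \<epsilon> / 8)" using Vx pi_sq eps by linarith
    then have "(V x - 6 * \<epsilon>) * cf b x \<le> - (pi\<^sup>2 * \<epsilon> / 8) * cf b x"
      using cp by (intro mult_right_mono) auto
    also have "\<dots> = 2 * \<epsilon>\<^sup>2 * cf'' b x" by (rule cf''_eq[symmetric])
    finally have "2 * \<epsilon>\<^sup>2 * (qq \<epsilon> V (6 * \<epsilon>) x * cf b x) \<le> 2 * \<epsilon>\<^sup>2 * cf'' b x"
      unfolding qq_def using eps by simp
    then show "qq \<epsilon> V (6 * \<epsilon>) x * cf b x \<le> cf'' b x" using eps by simp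
  qed
  then have ne: "dirichlet_eigenvalues \<epsilon> V (b - \<rho>) (b + \<rho>) \<noteq> {}" by blast
  show ?thesis unfolding first_dirichlet_eigenvalue_def
    by (rule cInf_greatest[OF ne]) (use dir_all_gt[of "b - \<rho>" "b + \<rho>"] rho in \<open>auto intro: less_imp_le\<close>)
qed

lemma xs_loc: "\<bar>xs - 0\<bar> \<le> 4 * s \<or> \<bar>xs - 1/2\<bar> \<le> 4 * s"
proof -
  have "V xs < \<delta>0" using V_xs lam_lt small2 eps by linarith
  then have "xs \<notin> Bset" using delta0(2) by force
  then have o: "\<bar>xs\<bar> < \<rho>/2 \<or> \<bar>xs - 1/2\<bar> < \<rho>/2" using outside_Bset xs(1) by blast
  have key: "\<bar>xs - b\<bar> \<le> 4 * s" if b: "b = 0 \<or> b = 1/2" and h: "\<bar>xs - b\<bar> < \<rho>/2" for b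
  proof -
    have "3 * (xs - b)\<^sup>2 / 8 \<le> V (b + (xs - b))" using Vwell[OF b, of "xs - b"] h rho by auto
    then have "3 * (xs - b)\<^sup>2 / 8 < 6 * \<epsilon>" using V_xs lam_lt by simp
    then have "(xs - b)\<^sup>2 \<le> 4\<^sup>2 * \<epsilon>" by simp
    then show ?thesis by (rule sq_to_abs) simp
  qed
  show ?thesis using o key[of 0] key[of "1/2"] by auto
qed

definition "\<sigma>1 = \<rho> * sqrt \<delta>0 / 4"

lemma sigma1_pos: "\<sigma>1 > 0" unfolding \<sigma>1_def by (intro divide_pos_pos mult_pos_pos) (use rho delta0(1) in auto)

lemma barrier:
  assumes b: "b = 0 \<or> b = 1/2"
  shows "U (b - \<rho>) \<le> 2 * M * exp (- (\<sigma>1 / \<epsilon>))" "U (b + \<rho>) \<le> 2 * M * exp (- (\<sigma>1 / \<epsilon>))"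
proof -
  define k where "k = sqrt \<delta>0 / (2 * \<epsilon>)"
  have k: "k > 0" unfolding k_def using delta0(1) eps by simp
  have k2: "k\<^sup>2 = \<delta>0 / (4 * \<epsilon>\<^sup>2)" unfolding k_def using delta0(1) by (simp add: power_divide power_mult_distrib)
  have ineq: "U'' x \<ge> k\<^sup>2 * U x" if "\<rho>/2 \<le> \<bar>x - b\<bar>" "\<bar>x - b\<bar> \<le> 3 * \<rho> / 2" for x
  proof -
    have "V x \<ge> \<delta>0" using delta0(2) in_Bset[OF b that] by blast
    then have "V x - lam \<ge> \<delta>0 / 2" using lam_lt small2 by linarith
    then have "(\<delta>0 / 2) * U x \<le> (V x - lam) * U x" using Upos[of x] by (intro mult_right_mono) auto
    also have "\<dots> = 2 * \<epsilon>\<^sup>2 * U'' x" by (rule Upp[symmetric])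
    finally have "2 * \<epsilon>\<^sup>2 * (k\<^sup>2 * U x) \<le> 2 * \<epsilon>\<^sup>2 * U'' x" unfolding k2 using eps by (simp add: field_simps)
    then show ?thesis using eps by simp
  qed
  have ex: "k * (\<rho> / 2) = \<sigma>1 / \<epsilon>" unfolding k_def \<sigma>1_def using eps by (simp add: field_simps)
  have mid1: "((b - 3 * \<rho> / 2) + (b - \<rho> / 2)) / 2 = b - \<rho>" and half1: "((b - \<rho> / 2) - (b - 3 * \<rho> / 2)) / 2 = \<rho> / 2"
    by (simp_all add: field_simps)
  have "U (((b - 3 * \<rho> / 2) + (b - \<rho> / 2)) / 2) \<le> 2 * M * exp (- (k * (((b - \<rho> / 2) - (b - 3 * \<rho> / 2)) / 2)))"
    by (rule cosh_decay[OF _ k _ dU dU']) (use rho xs M_pos in \<open>auto intro!: ineq simp: abs_if\<close>)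
  then show "U (b - \<rho>) \<le> 2 * M * exp (- (\<sigma>1 / \<epsilon>))" unfolding mid1 half1 ex .
  have mid2: "((b + \<rho> / 2) + (b + 3 * \<rho> / 2)) / 2 = b + \<rho>" and half2: "((b + 3 * \<rho> / 2) - (b + \<rho> / 2)) / 2 = \<rho> / 2"
    by (simp_all add: field_simps)
  have "U (((b + \<rho> / 2) + (b + 3 * \<rho> / 2)) / 2) \<le> 2 * M * exp (- (k * (((b + 3 * \<rho> / 2) - (b + \<rho> / 2)) / 2)))"
    by (rule cosh_decay[OF _ k _ dU dU']) (use rho xs M_pos in \<open>auto intro!: ineq simp: abs_if\<close>)
  then show "U (b + \<rho>) \<le> 2 * M * exp (- (\<sigma>1 / \<epsilon>))" unfolding mid2 half2 ex .
qed

definition "\<kappa> = exp (-60::real)"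

lemma harn:
  assumes b: "b = 0 \<or> b = 1/2" and x: "\<bar>x - b\<bar> \<le> 5 * s" and y: "\<bar>y - b\<bar> \<le> 5 * s"
  shows "U x \<ge> \<kappa> * U y"
proof -
  define w where "w = 3 / s"
  have w: "w > 0" unfolding w_def using s_pos by simp
  have iw: "1 / w = s / 3" unfolding w_def by simp
  have K: "12 / \<epsilon> \<le> 2 * w\<^sup>2" unfolding w_def using s_sq s_pos eps by (simp add: power_divide field_simps)
  have reg: "\<bar>z - b\<bar> \<le> 6 * s" if "b - 5 * s - 1 / w \<le> z" "z \<le> b + 5 * s + 1 / w" for z
    using that s_pos unfolding iw by (auto simp: abs_le_iff)
  have h: "U x \<ge> exp (- (2 * w * \<bar>x - y\<bar>)) * U y"
  proof (rule harnack_ratio[OF w K _ dU dU'])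
    show "\<And>z. 0 < U z" by (rule Upos)
    fix z assume z: "b - 5 * s - 1 / w \<le> z" "z \<le> b + 5 * s + 1 / w"
    have zb: "\<bar>z - b\<bar> \<le> 6 * s" using reg[OF z] .
    then have "\<bar>z - b\<bar> < \<rho>" using s_lt s_pos by linarith
    then have Vz: "V (b + (z - b)) \<le> 5 * (z - b)\<^sup>2 / 8" using Vwell[OF b] by blast
    have "(z - b)\<^sup>2 \<le> 6\<^sup>2 * \<epsilon>" by (rule abs_to_sq[OF zb])
    then have "(z - b)\<^sup>2 \<le> 36 * \<epsilon>" by simp
    moreover have "V z \<le> 5 * (z - b)\<^sup>2 / 8" using Vz by simp
    ultimately have "V z \<le> 24 * \<epsilon>" using eps by linarith
    then have "(V z - lam) * U z \<le> (24 * \<epsilon>) * U z" using lam_nonneg Upos[of z] by (intro mult_right_mono) auto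
    then have "2 * \<epsilon>\<^sup>2 * U'' z \<le> 2 * \<epsilon>\<^sup>2 * (12 / \<epsilon> * U z)" unfolding Upp using eps by (simp add: power2_eq_square field_simps)
    then show "U'' z \<le> 12 / \<epsilon> * U z" using eps by (metis mult_le_cancel_left_pos zero_less_power zero_less_numeral mult_pos_pos)
  qed (use x y in \<open>auto simp: abs_le_iff\<close>)
  have "2 * w * \<bar>x - y\<bar> \<le> 2 * w * (10 * s)" using x y w by (intro mult_left_mono) (auto simp: abs_le_iff)
  also have "\<dots> = 60" unfolding w_def using s_pos by simp
  finally have "exp (-60) \<le> exp (- (2 * w * \<bar>x - y\<bar>))" by simp
  then have "\<kappa> * U y \<le> exp (- (2 * w * \<bar>x - y\<bar>)) * U y" unfolding \<kappa>_def using Upos[of y] by (intro mult_right_mono) auto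
  with h show ?thesis by simp
qed

lemma exp_half_sq: "exp (- (\<sigma>1 / \<epsilon>)) = (exp (- (\<sigma>1 / (2 * \<epsilon>))))\<^sup>2"
proof -
  have "(exp (- (\<sigma>1 / (2 * \<epsilon>))))\<^sup>2 = exp (- (\<sigma>1 / (2 * \<epsilon>)) + - (\<sigma>1 / (2 * \<epsilon>)))"
    by (simp add: power2_eq_square exp_add[symmetric])
  also have "- (\<sigma>1 / (2 * \<epsilon>)) + - (\<sigma>1 / (2 * \<epsilon>)) = - (\<sigma>1 / \<epsilon>)" by (simp add: field_simps)
  finally show ?thesis by simp
qed

lemma Eb_upper:
  assumes b: "b = 0 \<or> b = 1/2" and C0: "C0 > 0" "C0 * \<epsilon> \<le> 2"
    and hb: "U b \<ge> exp (- (\<sigma>1 / (2 * \<epsilon>))) * M"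
    and ec1: "exp (\<sigma>1 / (2 * \<epsilon>)) \<ge> 56 / (C0 * \<kappa> * \<epsilon>)"
    and ec2: "exp (\<sigma>1 / (2 * \<epsilon>)) > 4"
  shows "first_dirichlet_eigenvalue \<epsilon> V (b - \<rho>) (b + \<rho>) \<le> lam + C0 * \<epsilon>\<^sup>2 / 2"
proof -
  define \<eta> where "\<eta> = exp (- (\<sigma>1 / (2 * \<epsilon>)))"
  have eta: "\<eta> > 0" unfolding \<eta>_def by simp
  have eta_inv: "\<eta> * exp (\<sigma>1 / (2 * \<epsilon>)) = 1" unfolding \<eta>_def by (simp add: exp_minus)
  have eta4: "4 * \<eta> < 1"
  proof -
    have "4 * \<eta> < exp (\<sigma>1 / (2 * \<epsilon>)) * \<eta>" using ec2 eta by simp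
    then show ?thesis using eta_inv by (simp add: mult.commute)
  qed
  have kap: "\<kappa> > 0" "\<kappa> \<le> 1" unfolding \<kappa>_def by auto
  have eta56: "56 * \<eta> \<le> C0 * \<kappa> * \<epsilon>"
  proof -
    have pos: "C0 * \<kappa> * \<epsilon> > 0" using C0 kap eps by simp
    have "56 \<le> exp (\<sigma>1 / (2 * \<epsilon>)) * (C0 * \<kappa> * \<epsilon>)" using ec1 pos by (simp add: divide_le_eq)
    then have "56 * \<eta> \<le> exp (\<sigma>1 / (2 * \<epsilon>)) * (C0 * \<kappa> * \<epsilon>) * \<eta>" using eta by (intro mult_right_mono) auto
    also have "\<dots> = C0 * \<kappa> * \<epsilon>" using eta_inv by (simp add: field_simps)
    finally show ?thesis .
  qed
  define Hv where "Hv = 2 * max (U (b - \<rho>)) (U (b + \<rho>))"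
  have Hv_ub: "Hv \<le> 4 * M * \<eta>\<^sup>2"
    using barrier[OF b] unfolding Hv_def \<eta>_def exp_half_sq by simp
  have Hv_gt: "U (b - \<rho>) < Hv" "U (b + \<rho>) < Hv" unfolding Hv_def
    using Upos[of "b - \<rho>"] Upos[of "b + \<rho>"] by (auto simp: max_def)
  have Hv_pos: "Hv > 0" using Hv_gt Upos[of "b - \<rho>"] by simp
  have Ub_gt: "U b > Hv"
  proof -
    have "Hv \<le> (4 * \<eta>) * (M * \<eta>)" using Hv_ub by (simp add: power2_eq_square mult_ac)
    also have "\<dots> < 1 * (M * \<eta>)" using eta4 M_pos eta by (intro mult_strict_right_mono) auto
    also have "\<dots> \<le> U b" using hb unfolding \<eta>_def by (simp add: mult.commute)
    finally show ?thesis by simp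
  qed
  define p where "p = (\<lambda>x. U x - Hv)"
  have cp: "continuous_on {b - \<rho>..b + \<rho>} p" unfolding p_def using cU by (intro continuous_intros)
  obtain c d where cd: "b - \<rho> \<le> c" "c < b" "b < d" "d \<le> b + \<rho>" "p c = 0" "p d = 0"
      "\<And>x. c < x \<Longrightarrow> x < d \<Longrightarrow> p x > 0"
    using nodal[OF cp, of b] Hv_gt Ub_gt rho unfolding p_def by force
  have cl: "b - \<rho> < c" using cd(1,5) Hv_gt(1) unfolding p_def by (cases "c = b - \<rho>") auto
  define \<mu> where "\<mu> = lam + C0 * \<epsilon>\<^sup>2 / 2"
  have mu7: "\<mu> \<le> 7 * \<epsilon>"
  proof -
    have "C0 * \<epsilon>\<^sup>2 / 2 = (C0 * \<epsilon>) * \<epsilon> / 2" by (simp add: power2_eq_square)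
    also have "\<dots> \<le> 2 * \<epsilon> / 2" using C0 eps by (intro divide_right_mono mult_right_mono) auto
    finally show ?thesis unfolding \<mu>_def using lam_lt by simp
  qed
  interpret sh: shoot \<epsilon> V "b - \<rho>" "b + \<rho>" using eps Vc rho by unfold_locales auto
  have "\<exists>\<nu>\<le>\<mu>. \<nu> \<in> dirichlet_eigenvalues \<epsilon> V (b - \<rho>) (b + \<rho>)"
  proof (rule sh.shooting[of "-1" c d p U' U''])
    show "\<And>t. -1 \<le> V t" using Vnonneg by (metis le_minus_one_simps(1) order_trans)
    show "b - \<rho> < c" "c < d" "d \<le> b + \<rho>" using cl cd by auto
    show "continuous_on {c..d} p" by (rule continuous_on_subset[OF cp]) (use cd in auto)
    show "p c = 0" "p d = 0" by (fact cd)+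
    show "\<And>x. c < x \<Longrightarrow> x < d \<Longrightarrow> 0 < p x" by (fact cd)
    show "\<And>x. (p has_real_derivative U' x) (at x)" unfolding p_def using dU by (auto intro!: derivative_eq_intros)
    show "\<And>x. (U' has_real_derivative U'' x) (at x)" by (rule dU')
    fix x assume x: "c < x" "x < d"
    have xb: "\<bar>x - b\<bar> < \<rho>" using x cd cl by auto
    have key: "(\<mu> - lam) * U x + (V x - \<mu>) * Hv \<ge> 0"
    proof (cases "V x \<ge> \<mu>")
      case True
      have "\<mu> - lam \<ge> 0" unfolding \<mu>_def using C0 by simp
      then show ?thesis using True Upos[of x] Hv_pos by simp
    next
      case False
      then have Vlt: "V x < 7 * \<epsilon>" using mu7 by simp
      have core: "\<bar>x - b\<bar> \<le> 5 * s"
      proof -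
        have "\<bar>x - b\<bar> < \<rho> / 2"
        proof (rule ccontr)
          assume "\<not> \<bar>x - b\<bar> < \<rho> / 2"
          then have "x \<in> Bset" using in_Bset[OF b] xb by simp
          then have "V x \<ge> \<delta>0" by (rule delta0(2))
          then show False using Vlt small2 eps by simp
        qed
        then have "3 * (x - b)\<^sup>2 / 8 \<le> V (b + (x - b))" using Vwell[OF b, of "x - b"] rho by auto
        then have "3 * (x - b)\<^sup>2 / 8 < 7 * \<epsilon>" using Vlt by simp
        then have "(x - b)\<^sup>2 \<le> 5\<^sup>2 * \<epsilon>" using eps by simp
        then show ?thesis by (rule sq_to_abs) simp
      qed
      have Ux: "U x \<ge> \<kappa> * (\<eta> * M)"
      proof -
        have "U x \<ge> \<kappa> * U b" by (rule harn[OF b core]) (use eps in simp)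
        moreover have "U b \<ge> \<eta> * M" using hb unfolding \<eta>_def .
        ultimately show ?thesis using kap by (meson mult_left_mono order_trans less_imp_le)
      qed
      have "(\<mu> - V x) * Hv \<le> (7 * \<epsilon>) * (4 * M * \<eta>\<^sup>2)"
        using mu7 Vnonneg[of x] Hv_ub Hv_pos eps by (intro mult_mono) auto
      also have "\<dots> = (28 * \<eta>) * (\<epsilon> * M * \<eta>)" by (simp add: power2_eq_square)
      also have "\<dots> \<le> (C0 * \<kappa> * \<epsilon> / 2) * (\<epsilon> * M * \<eta>)"
        using eta56 eps M_pos eta by (intro mult_right_mono) auto
      also have "\<dots> = (C0 * \<epsilon>\<^sup>2 / 2) * (\<kappa> * (\<eta> * M))" by (simp add: power2_eq_square)
      also have "\<dots> \<le> (C0 * \<epsilon>\<^sup>2 / 2) * U x" using Ux C0 by (intro mult_left_mono) auto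
      also have "\<dots> = (\<mu> - lam) * U x" unfolding \<mu>_def by simp
      finally show ?thesis by (simp add: algebra_simps)
    qed
    have "2 * \<epsilon>\<^sup>2 * (qq \<epsilon> V \<mu> x * p x) = (V x - \<mu>) * (U x - Hv)"
      unfolding qq_def p_def using eps by simp
    also have "\<dots> \<le> (V x - lam) * U x" using key by (simp add: algebra_simps)
    also have "\<dots> = 2 * \<epsilon>\<^sup>2 * U'' x" by (rule Upp[symmetric])
    finally show "qq \<epsilon> V \<mu> x * p x \<le> U'' x" using eps
      by (metis mult_le_cancel_left_pos zero_less_power zero_less_numeral mult_pos_pos)
  qed
  then obtain \<nu> where nu: "\<nu> \<le> \<mu>" "\<nu> \<in> dirichlet_eigenvalues \<epsilon> V (b - \<rho>) (b + \<rho>)" by blast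
  have "first_dirichlet_eigenvalue \<epsilon> V (b - \<rho>) (b + \<rho>) \<le> \<nu>"
    unfolding first_dirichlet_eigenvalue_def by (rule cInf_lower[OF nu(2) dir_bdd]) (use rho in simp)
  then show ?thesis using nu(1) unfolding \<mu>_def by simp
qed

lemma main_est:
  assumes bb: "(b = 1/2 \<and> b' = 0) \<or> (b = 0 \<and> b' = 1/2)"
    and C0: "C0 > 0" "C0 * \<epsilon> \<le> 2"
    and ec1: "exp (\<sigma>1 / (2 * \<epsilon>)) \<ge> 56 / (C0 * \<kappa> * \<epsilon>)"
    and ec2: "exp (\<sigma>1 / (2 * \<epsilon>)) > 4" and ec3: "exp (\<sigma>1 / (2 * \<epsilon>)) > 1 / \<kappa>"
    and hyp: "first_dirichlet_eigenvalue \<epsilon> V (b' - \<rho>) (b' + \<rho>) \<le> first_dirichlet_eigenvalue \<epsilon> V (b - \<rho>) (b + \<rho>) - C0 * \<epsilon>\<^sup>2"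
  shows "U b / U b' \<le> (1 / \<kappa>) * exp (- ((\<sigma>1 / 2) / \<epsilon>))"
proof -
  have b: "b = 0 \<or> b = 1/2" and b': "b' = 0 \<or> b' = 1/2" using bb by auto
  define \<eta> where "\<eta> = exp (- (\<sigma>1 / (2 * \<epsilon>)))"
  have eta: "\<eta> > 0" unfolding \<eta>_def by simp
  have kap: "\<kappa> > 0" unfolding \<kappa>_def by auto
  have Ub: "U b < \<eta> * M"
  proof (rule ccontr)
    assume "\<not> U b < \<eta> * M"
    then have "U b \<ge> exp (- (\<sigma>1 / (2 * \<epsilon>))) * M" unfolding \<eta>_def by simp
    from Eb_upper[OF b C0 this ec1 ec2] have "first_dirichlet_eigenvalue \<epsilon> V (b - \<rho>) (b + \<rho>) \<le> lam + C0 * \<epsilon>\<^sup>2 / 2" .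
    moreover have "first_dirichlet_eigenvalue \<epsilon> V (b' - \<rho>) (b' + \<rho>) \<ge> lam" by (rule E_lower[OF b'])
    moreover have "C0 * \<epsilon>\<^sup>2 > 0" using C0 eps by simp
    ultimately show False using hyp by simp
  qed
  have eta_k: "\<eta> < \<kappa>"
  proof -
    have "1 / \<kappa> * \<eta> < exp (\<sigma>1 / (2 * \<epsilon>)) * \<eta>" using mult_strict_right_mono[OF ec3 eta] .
    also have "\<dots> = 1" unfolding \<eta>_def by (simp add: exp_minus)
    finally show ?thesis using kap by (simp add: field_simps)
  qed
  have xb': "\<bar>xs - b'\<bar> \<le> 4 * s"
  proof (rule ccontr)
    assume "\<not> \<bar>xs - b'\<bar> \<le> 4 * s"
    then have "\<bar>xs - b\<bar> \<le> 4 * s" using xs_loc bb by auto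
    then have "U b \<ge> \<kappa> * M" using harn[OF b, of b xs] s_pos by simp
    moreover have "\<kappa> * M > \<eta> * M" using eta_k M_pos by simp
    ultimately show False using Ub by simp
  qed
  have "U b' \<ge> \<kappa> * M" using harn[OF b', of b' xs] xb' s_pos by simp
  then have "U b < \<eta> * (U b' / \<kappa>)" using Ub eta kap M_pos
    by (smt (verit) divide_right_mono mult_left_mono nonzero_mult_div_cancel_left)
  then have "U b / U b' < \<eta> / \<kappa>" using Upos[of b'] kap by (simp add: field_simps)
  moreover have "\<eta> / \<kappa> = (1 / \<kappa>) * exp (- ((\<sigma>1 / 2) / \<epsilon>))" unfolding \<eta>_def by simp
  ultimately show ?thesis by simp
qed

end

context wellsetup
begin

lemma uniform_est:
  assumes C0: "C0 > 0"
  obtains \<sigma> C \<epsilon>0 where "\<sigma> > 0" "C > 0" "\<epsilon>0 > 0"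
    "\<And>\<epsilon> U U' U'' lam b b'. 0 < \<epsilon> \<Longrightarrow> \<epsilon> < \<epsilon>0 \<Longrightarrow> (\<And>x. U x > 0) \<Longrightarrow> periodic1 U \<Longrightarrow>
       (\<And>x. (U has_real_derivative U' x) (at x)) \<Longrightarrow> (\<And>x. (U' has_real_derivative U'' x) (at x)) \<Longrightarrow>
       (\<And>x. - 2 * \<epsilon>\<^sup>2 * U'' x + V x * U x = lam * U x) \<Longrightarrow>
       (b = 1/2 \<and> b' = 0) \<or> (b = 0 \<and> b' = 1/2) \<Longrightarrow>
       first_dirichlet_eigenvalue \<epsilon> V (b' - \<rho>) (b' + \<rho>) \<le> first_dirichlet_eigenvalue \<epsilon> V (b - \<rho>) (b + \<rho>) - C0 * \<epsilon>\<^sup>2 \<Longrightarrow>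
       U b / U b' \<le> C * exp (- (\<sigma> / \<epsilon>))"
proof -
  define s1 where "s1 = \<rho> * sqrt \<delta>0 / 4"
  have s1: "s1 > 0" unfolding s1_def by (intro divide_pos_pos mult_pos_pos) (use rho delta0(1) in auto)
  define k where "k = exp (- 60 :: real)"
  have k: "k > 0" unfolding k_def by simp
  define N where "N = 56 / (C0 * k) + 1 / k + 4"
  have p1: "56 / (C0 * k) > 0" "1 / k > 0" using C0 k by auto
  have N: "N > 4" "N \<ge> 56 / (C0 * k)" "N > 1 / k" unfolding N_def using p1 by linarith+
  define e0 where "e0 = min (min (\<rho>\<^sup>2 / 144) (\<delta>0 / 12)) (min (2 / C0) (min (s1\<^sup>2 / (16 * N)) 1))"
  have e0: "e0 > 0" unfolding e0_def using rho delta0(1) C0 s1 N by auto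
  have main: "U b / U b' \<le> (1 / k) * exp (- ((s1 / 2) / \<epsilon>))"
    if eps: "0 < \<epsilon>" "\<epsilon> < e0" and Upos: "\<And>x. U x > 0" and Uper: "periodic1 U"
      and dU: "\<And>x. (U has_real_derivative U' x) (at x)" and dU': "\<And>x. (U' has_real_derivative U'' x) (at x)"
      and eqU: "\<And>x. - 2 * \<epsilon>\<^sup>2 * U'' x + V x * U x = lam * U x"
      and bb: "(b = 1/2 \<and> b' = 0) \<or> (b = 0 \<and> b' = 1/2)"
      and hyp: "first_dirichlet_eigenvalue \<epsilon> V (b' - \<rho>) (b' + \<rho>) \<le> first_dirichlet_eigenvalue \<epsilon> V (b - \<rho>) (b + \<rho>) - C0 * \<epsilon>\<^sup>2"
    for \<epsilon> U U' U'' lam b b'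
  proof -
    have el: "\<epsilon> < \<rho>\<^sup>2 / 144" "\<epsilon> < \<delta>0 / 12" "\<epsilon> < 2 / C0" "\<epsilon> < s1\<^sup>2 / (16 * N)" "\<epsilon> < 1"
      using eps(2) unfolding e0_def by auto
    have sm1: "12 * sqrt \<epsilon> < \<rho>"
    proof -
      have "sqrt \<epsilon> < sqrt (\<rho>\<^sup>2 / 144)" using el(1) by (rule real_sqrt_less_mono)
      also have "sqrt (\<rho>\<^sup>2 / 144) = \<rho> / 12" using rho by (simp add: real_sqrt_divide)
      finally show ?thesis by simp
    qed
    have sm2: "12 * \<epsilon> \<le> \<delta>0" using el(2) by simp
    interpret e: epsU \<rho> A V \<epsilon> lam U U' U''
      by unfold_locales (use eps Upos Uper dU dU' eqU sm1 sm2 in auto)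
    have es1: "e.\<sigma>1 = s1" unfolding e.\<sigma>1_def s1_def ..
    have ek: "e.\<kappa> = k" unfolding e.\<kappa>_def k_def ..
    have C0e: "C0 * \<epsilon> \<le> 2" using el(3) C0 by (simp add: field_simps)
    define y where "y = s1 / (2 * \<epsilon>)"
    have y: "y \<ge> 0" unfolding y_def using s1 eps by simp
    have "exp y \<ge> y\<^sup>2 / 4" by (rule exp_ge_sq4[OF y])
    moreover have "y\<^sup>2 / 4 = s1\<^sup>2 / (16 * \<epsilon>\<^sup>2)" unfolding y_def by (simp add: power_divide power_mult_distrib)
    moreover have "s1\<^sup>2 / (16 * \<epsilon>\<^sup>2) \<ge> N / \<epsilon>"
    proof -
      have "16 * N * \<epsilon> \<le> s1\<^sup>2" using el(4) N by (simp add: field_simps)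
      then have "N * \<epsilon> * 16 \<le> s1\<^sup>2" by (simp add: mult_ac)
      then show ?thesis using eps by (simp add: field_simps power2_eq_square)
    qed
    ultimately have ey: "exp y \<ge> N / \<epsilon>" by simp
    have NeN: "N / \<epsilon> \<ge> N" using el(5) eps N by (simp add: field_simps)
    have ec1: "exp (e.\<sigma>1 / (2 * \<epsilon>)) \<ge> 56 / (C0 * e.\<kappa> * \<epsilon>)"
    proof -
      have "56 / (C0 * k * \<epsilon>) = (56 / (C0 * k)) / \<epsilon>" by simp
      also have "\<dots> \<le> N / \<epsilon>" using N(2) eps by (intro divide_right_mono) auto
      finally show ?thesis using ey unfolding es1 ek y_def by simp
    qed
    have ec2: "exp (e.\<sigma>1 / (2 * \<epsilon>)) > 4" using ey NeN N(1) unfolding es1 y_def by simp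
    have ec3: "exp (e.\<sigma>1 / (2 * \<epsilon>)) > 1 / e.\<kappa>" using ey NeN N(3) unfolding es1 ek y_def by simp
    from e.main_est[OF bb C0 C0e ec1 ec2 ec3 hyp] show ?thesis unfolding es1 ek .
  qed
  show ?thesis
  proof (rule that[of "s1 / 2" "1 / k" e0])
    show "s1 / 2 > 0" "1 / k > 0" "e0 > 0" using s1 k e0 by auto
  qed (rule main)
qed

end

lemma phi_lower:
  fixes r e C \<sigma> :: real
  assumes r: "r > 0" and C: "C > 0" and e: "e > 0" and s: "\<sigma> > 0"
    and b: "r \<le> C * exp (- (\<sigma> / e))" and small: "e * \<bar>ln C\<bar> \<le> \<sigma> / 2"
  shows "- 2 * e * ln r \<ge> \<sigma>"
proof -
  have "ln r \<le> ln (C * exp (- (\<sigma> / e)))" using b r by simp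
  also have "\<dots> = ln C - \<sigma> / e" using C by (simp add: ln_mult)
  finally have "ln r \<le> ln C - \<sigma> / e" .
  then have "e * ln r \<le> e * (ln C - \<sigma> / e)" using e by (intro mult_left_mono) auto
  also have "\<dots> = e * ln C - \<sigma>" using e by (simp add: field_simps)
  finally have "e * ln r \<le> e * ln C - \<sigma>" .
  moreover have "e * ln C \<le> e * \<bar>ln C\<bar>" using e by (intro mult_left_mono) auto
  ultimately show ?thesis using small by linarith
qed

lemma eventually_small:
  fixes e :: "nat \<Rightarrow> real"
  assumes "e \<longlonglongrightarrow> 0" "d > 0"
  shows "eventually (\<lambda>n. e n < d) sequentially"
  using order_tendstoD(2)[OF assms] .

theorem lemma3p1:
  fixes \<rho> A C\<^sub>0 :: real and V :: "real \<Rightarrow> real" and U :: "real \<Rightarrow> real \<Rightarrow> real"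
  assumes rho: "0 < \<rho>" "\<rho> < 1/20"
    and A: "A \<noteq> 0" "2 * \<bar>A\<bar> * \<rho>\<^sup>2 \<le> 1/4"
    and Vper: "periodic1 V" and VC3: "C3 V"
    and V0: "\<And>x. \<bar>x\<bar> < \<rho> \<Longrightarrow> V x = x\<^sup>2 / 2 + A * x ^ 4 * omega \<bar>x\<bar>"
    and Va: "\<And>x. \<bar>x - 1/2\<bar> < \<rho> \<Longrightarrow>
               V x = (x - 1/2)\<^sup>2 / 2 - A * (x - 1/2) ^ 4 * omega \<bar>x - 1/2\<bar>"
    and Vpos: "\<And>x. x \<notin> \<int> \<Longrightarrow> x - 1/2 \<notin> \<int> \<Longrightarrow> V x > 0"
    and C0: "C\<^sub>0 > 0"
    and U: "\<And>\<epsilon>. \<epsilon> > 0 \<Longrightarrow> principal_eigenfunction \<epsilon> V (U \<epsilon>)"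
  shows "\<exists>\<sigma> C \<epsilon>\<^sub>0. \<sigma> > 0 \<and> C > 0 \<and> \<epsilon>\<^sub>0 > 0 \<and>
    (let \<phi> = (\<lambda>\<epsilon> x. - 2 * \<epsilon> * ln (U \<epsilon> x / U \<epsilon> 0));
         E0 = (\<lambda>\<epsilon>. first_dirichlet_eigenvalue \<epsilon> V (- \<rho>) \<rho>);
         Ea = (\<lambda>\<epsilon>. first_dirichlet_eigenvalue \<epsilon> V (1/2 - \<rho>) (1/2 + \<rho>))
     in (\<forall>e :: nat \<Rightarrow> real. (\<forall>n. e n > 0) \<and> e \<longlonglongrightarrow> 0 \<and>
            (\<forall>n. E0 (e n) \<le> Ea (e n) - C\<^sub>0 * (e n)\<^sup>2) \<longrightarrow>
            (\<forall>n. e n < \<epsilon>\<^sub>0 \<longrightarrow> U (e n) (1/2) / U (e n) 0 \<le> C * exp (- \<sigma> / e n)) \<and>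
            liminf (\<lambda>n. ereal (\<phi> (e n) (1/2))) > 0)
      \<and> (\<forall>e :: nat \<Rightarrow> real. (\<forall>n. e n > 0) \<and> e \<longlonglongrightarrow> 0 \<and>
            (\<forall>n. Ea (e n) \<le> E0 (e n) - C\<^sub>0 * (e n)\<^sup>2) \<longrightarrow>
            (\<forall>n. e n < \<epsilon>\<^sub>0 \<longrightarrow> U (e n) 0 / U (e n) (1/2) \<le> C * exp (- \<sigma> / e n)) \<and>
            limsup (\<lambda>n. ereal (\<phi> (e n) (1/2))) < 0))"
proof -
  have Vc: "continuous_on UNIV V"
  proof -
    have "\<forall>x. ((deriv ^^ 0) V) differentiable (at x)" using VC3 unfolding C3_def
      by (metis zero_less_numeral)
    then have "\<And>x. isCont V x" by (simp add: differentiable_imp_continuous_within)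
    then show ?thesis by (simp add: continuous_at_imp_continuous_on)
  qed
  interpret w: wellsetup \<rho> A V by unfold_locales (use rho A Vper Vc V0 Va Vpos in auto)
  obtain \<sigma> C \<epsilon>0 where sc: "\<sigma> > 0" "C > 0" "\<epsilon>0 > 0" and est:
    "\<And>\<epsilon> U U' U'' lam b b'. 0 < \<epsilon> \<Longrightarrow> \<epsilon> < \<epsilon>0 \<Longrightarrow> (\<And>x. U x > 0) \<Longrightarrow> periodic1 U \<Longrightarrow>
       (\<And>x. (U has_real_derivative U' x) (at x)) \<Longrightarrow> (\<And>x. (U' has_real_derivative U'' x) (at x)) \<Longrightarrow>
       (\<And>x. - 2 * \<epsilon>\<^sup>2 * U'' x + V x * U x = lam * U x) \<Longrightarrow>
       (b = 1/2 \<and> b' = 0) \<or> (b = 0 \<and> b' = 1/2) \<Longrightarrow>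
       first_dirichlet_eigenvalue \<epsilon> V (b' - \<rho>) (b' + \<rho>) \<le> first_dirichlet_eigenvalue \<epsilon> V (b - \<rho>) (b + \<rho>) - C\<^sub>0 * \<epsilon>\<^sup>2 \<Longrightarrow>
       U b / U b' \<le> C * exp (- (\<sigma> / \<epsilon>))"
    using w.uniform_est[OF C0] by blast
  have Upos: "U \<epsilon> x > 0" if "\<epsilon> > 0" for \<epsilon> x
    using U[OF that] unfolding principal_eigenfunction_def by blast
  have ratio: "U \<epsilon> b / U \<epsilon> b' \<le> C * exp (- \<sigma> / \<epsilon>)"
    if e: "0 < \<epsilon>" "\<epsilon> < \<epsilon>0" and bb: "(b = 1/2 \<and> b' = 0) \<or> (b = 0 \<and> b' = 1/2)"
      and hyp: "first_dirichlet_eigenvalue \<epsilon> V (b' - \<rho>) (b' + \<rho>) \<le> first_dirichlet_eigenvalue \<epsilon> V (b - \<rho>) (b + \<rho>) - C\<^sub>0 * \<epsilon>\<^sup>2"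
    for \<epsilon> b b'
  proof -
    have pe: "principal_eigenfunction \<epsilon> V (U \<epsilon>)" using U e by simp
    then obtain U' U'' where UU: "\<And>x. (U \<epsilon> has_real_derivative U' x) (at x)" "\<And>x. (U' has_real_derivative U'' x) (at x)"
      "\<And>x. - 2 * \<epsilon>\<^sup>2 * U'' x + V x * U \<epsilon> x = principal_eigenvalue \<epsilon> V * U \<epsilon> x"
      unfolding principal_eigenfunction_def by blast
    have "periodic1 (U \<epsilon>)" "\<And>x. U \<epsilon> x > 0" using pe unfolding principal_eigenfunction_def by auto
    from est[OF e(1) e(2) this(2) this(1) UU bb hyp] show ?thesis by simp
  qed
  define d where "d = min \<epsilon>0 (\<sigma> / (2 * (\<bar>ln C\<bar> + 1)))"
  have d: "d > 0" "d \<le> \<epsilon>0" "d * \<bar>ln C\<bar> \<le> \<sigma> / 2"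
  proof -
    show "d > 0" unfolding d_def using sc by auto
    show "d \<le> \<epsilon>0" unfolding d_def by simp
    have "d \<le> \<sigma> / (2 * (\<bar>ln C\<bar> + 1))" unfolding d_def by simp
    then have "d * (\<bar>ln C\<bar> + 1) \<le> \<sigma> / 2" by (simp add: field_simps)
    moreover have "d * \<bar>ln C\<bar> \<le> d * (\<bar>ln C\<bar> + 1)" using \<open>d > 0\<close> by simp
    ultimately show "d * \<bar>ln C\<bar> \<le> \<sigma> / 2" by linarith
  qed
  have smallness: "e * \<bar>ln C\<bar> \<le> \<sigma> / 2" if "0 < e" "e < d" for e
  proof -
    have "e * \<bar>ln C\<bar> \<le> d * \<bar>ln C\<bar>" using that by (intro mult_right_mono) auto
    then show ?thesis using d by linarith
  qed
  have part1: "\<forall>e :: nat \<Rightarrow> real. (\<forall>n. 0 < e n) \<and> e \<longlonglongrightarrow> 0 \<and>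
      (\<forall>n. first_dirichlet_eigenvalue (e n) V (- \<rho>) \<rho> \<le> first_dirichlet_eigenvalue (e n) V (1 / 2 - \<rho>) (1 / 2 + \<rho>) - C\<^sub>0 * (e n)\<^sup>2) \<longrightarrow>
      (\<forall>n. e n < \<epsilon>0 \<longrightarrow> U (e n) (1 / 2) / U (e n) 0 \<le> C * exp (- \<sigma> / e n)) \<and>
      0 < liminf (\<lambda>n. ereal (- 2 * e n * ln (U (e n) (1 / 2) / U (e n) 0)))"
  proof (rule allI, rule impI)
    fix e :: "nat \<Rightarrow> real"
    assume h: "(\<forall>n. 0 < e n) \<and> e \<longlonglongrightarrow> 0 \<and>
      (\<forall>n. first_dirichlet_eigenvalue (e n) V (- \<rho>) \<rho> \<le> first_dirichlet_eigenvalue (e n) V (1 / 2 - \<rho>) (1 / 2 + \<rho>) - C\<^sub>0 * (e n)\<^sup>2)"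
    have bnd: "U (e n) (1 / 2) / U (e n) 0 \<le> C * exp (- \<sigma> / e n)" if "e n < \<epsilon>0" for n
      using ratio[of "e n" "1/2" 0] h that by simp
    have ev: "eventually (\<lambda>n. ereal \<sigma> \<le> ereal (- 2 * e n * ln (U (e n) (1 / 2) / U (e n) 0))) sequentially"
      using eventually_small[OF conjunct1[OF conjunct2[OF h]] d(1)]
    proof eventually_elim
      case (elim n)
      have en: "0 < e n" using h by simp
      have "\<sigma> \<le> - 2 * e n * ln (U (e n) (1 / 2) / U (e n) 0)"
        by (rule phi_lower[OF _ sc(2) en sc(1)]) (use Upos[OF en] bnd[of n] elim d smallness[OF en] in auto)
      then show ?case by simp
    qed
    have "ereal \<sigma> \<le> liminf (\<lambda>n. ereal (- 2 * e n * ln (U (e n) (1 / 2) / U (e n) 0)))"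
      by (rule Liminf_bounded[OF ev])
    then have "0 < liminf (\<lambda>n. ereal (- 2 * e n * ln (U (e n) (1 / 2) / U (e n) 0)))"
      using sc(1) by (meson ereal_less(2) less_le_trans zero_less_real_of_ereal)
    then show "(\<forall>n. e n < \<epsilon>0 \<longrightarrow> U (e n) (1 / 2) / U (e n) 0 \<le> C * exp (- \<sigma> / e n)) \<and>
      0 < liminf (\<lambda>n. ereal (- 2 * e n * ln (U (e n) (1 / 2) / U (e n) 0)))" using bnd by blast
  qed
  have part2: "\<forall>e :: nat \<Rightarrow> real. (\<forall>n. 0 < e n) \<and> e \<longlonglongrightarrow> 0 \<and>
      (\<forall>n. first_dirichlet_eigenvalue (e n) V (1 / 2 - \<rho>) (1 / 2 + \<rho>) \<le> first_dirichlet_eigenvalue (e n) V (- \<rho>) \<rho> - C\<^sub>0 * (e n)\<^sup>2) \<longrightarrow>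
      (\<forall>n. e n < \<epsilon>0 \<longrightarrow> U (e n) 0 / U (e n) (1 / 2) \<le> C * exp (- \<sigma> / e n)) \<and>
      limsup (\<lambda>n. ereal (- 2 * e n * ln (U (e n) (1 / 2) / U (e n) 0))) < 0"
  proof (rule allI, rule impI)
    fix e :: "nat \<Rightarrow> real"
    assume h: "(\<forall>n. 0 < e n) \<and> e \<longlonglongrightarrow> 0 \<and>
      (\<forall>n. first_dirichlet_eigenvalue (e n) V (1 / 2 - \<rho>) (1 / 2 + \<rho>) \<le> first_dirichlet_eigenvalue (e n) V (- \<rho>) \<rho> - C\<^sub>0 * (e n)\<^sup>2)"
    have bnd: "U (e n) 0 / U (e n) (1 / 2) \<le> C * exp (- \<sigma> / e n)" if "e n < \<epsilon>0" for n
      using ratio[of "e n" 0 "1/2"] h that by simp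
    have ev: "eventually (\<lambda>n. ereal (- 2 * e n * ln (U (e n) (1 / 2) / U (e n) 0)) \<le> ereal (- \<sigma>)) sequentially"
      using eventually_small[OF conjunct1[OF conjunct2[OF h]] d(1)]
    proof eventually_elim
      case (elim n)
      have en: "0 < e n" using h by simp
      have "\<sigma> \<le> - 2 * e n * ln (U (e n) 0 / U (e n) (1 / 2))"
        by (rule phi_lower[OF _ sc(2) en sc(1)]) (use Upos[OF en] bnd[of n] elim d smallness[OF en] in auto)
      moreover have "ln (U (e n) 0 / U (e n) (1 / 2)) = - ln (U (e n) (1 / 2) / U (e n) 0)"
        using Upos[OF en, of 0] Upos[OF en, of "1/2"] by (simp add: ln_div)
      ultimately show ?case by simp
    qed
    have "limsup (\<lambda>n. ereal (- 2 * e n * ln (U (e n) (1 / 2) / U (e n) 0))) \<le> ereal (- \<sigma>)"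
      by (rule Limsup_bounded[OF ev])
    moreover have "ereal (- \<sigma>) < 0" using sc(1) by (simp add: zero_ereal_def)
    ultimately have "limsup (\<lambda>n. ereal (- 2 * e n * ln (U (e n) (1 / 2) / U (e n) 0))) < 0"
      by (rule le_less_trans)
    then show "(\<forall>n. e n < \<epsilon>0 \<longrightarrow> U (e n) 0 / U (e n) (1 / 2) \<le> C * exp (- \<sigma> / e n)) \<and>
      limsup (\<lambda>n. ereal (- 2 * e n * ln (U (e n) (1 / 2) / U (e n) 0))) < 0" using bnd by blast
  qed
  show ?thesis unfolding Let_def using sc part1 part2 by blast
qed

end
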